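(* Let $(\mathrm{PA}_t)_{t\ge1}$ be the preferential attachment model with $m\ge2$ and $\delta\in(-m,0)$. Fix $\varepsilon>0$ and let $k^-_t=(1-\varepsilon)\frac{\log\log t}{\log m}$ (rounded to an integer). Then $\mathbb{E}[M_{k_t^-}]\to\infty$ as $t\to\infty$, where $M_k=|\mathcal M_k|$ is the number of minimally-$k$-connected vertices in $\mathrm{PA}_t$.
   Context: Preferential attachment model: $\xi_{s,j}\in[s]$ is the vertex to which the $j$-th edge of vertex $s$ is attached. Order $(s,i)\le(t,j)$ iff $s<t$ or ($s=t$, $i\le j$); $(t,0):=(t-1,m)$. $D_{t,k}(v)=\sum_{(s,i)\le(t,k)}(\mathbf 1_{\{\xi_{s,i}=v\}}+\mathbf 1_{\{s=v\}})$, $D_t(v)=D_{t,m}(v)$. $\xi_{1,j}=1$; for $t\ge2$, given the past, $\xi_{t,j}=v$ with probability $(D_{t,j-1}(v)+1+j\delta/m)/c_{t,j}$ if $v=t$ and $(D_{t,j-1}(v)+\delta)/c_{t,j}$ if $v<t$, with $c_{t,j}=[m(t-1)+(j-1)](2+\delta/m)+1+\delta/m$. $\mathrm{PA}_t$ has an edge between $s$ and $\xi_{s,i}$ for each $(s,i)\le(t,m)$. $U_{\le k}(v)$ is the set/subgraph of vertices within distance $k$ of $v$. A vertex $v\in[t]\setminus[t/2]$ is minimally-$k$-connected if $D_t(v)=m$, all other vertices $i\in U_{\le k}(v)$ lie in $[t/2]\setminus[t/4]$ and have $D_t(i)=m+1$, and there are no self-loops, multiple edges or cycles in $U_{\le k}(v)$.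 *)

theory Defs
  imports "HOL-Probability.Probability"
begin

text \<open>The edge history of the model is a list xs of natural numbers:
  the entry xs ! i is the target \<xi>(s,j) of the edge (s,j) with
  i = m*(s-1) + (j-1), i.e. s = i div m + 1 and j = i mod m + 1.
  PA_t corresponds to the history of length m*t.\<close>

definition pa_src :: "nat \<Rightarrow> nat \<Rightarrow> nat" where
  "pa_src m i = i div m + 1"

definition pa_deg :: "nat \<Rightarrow> nat list \<Rightarrow> nat \<Rightarrow> nat" where
  "pa_deg m xs v = card {i. i < length xs \<and> xs ! i = v} + card {i. i < length xs \<and> pa_src m i = v}"

definition pa_c :: "nat \<Rightarrow> real \<Rightarrow> nat \<Rightarrow> nat \<Rightarrow> real" where
  "pa_c m \<delta> t j = real (m * (t - 1) + (j - 1)) * (2 + \<delta> / real m) + 1 + \<delta> / real m"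

definition pa_next_weight :: "nat \<Rightarrow> real \<Rightarrow> nat list \<Rightarrow> nat \<Rightarrow> real" where
  "pa_next_weight m \<delta> xs v =
     (let t = length xs div m + 1; j = length xs mod m + 1 in
      if t = 1 then (if v = 1 then 1 else 0)
      else if v = t then (real (pa_deg m xs v) + 1 + real j * \<delta> / real m) / pa_c m \<delta> t j
      else if 1 \<le> v \<and> v < t then (real (pa_deg m xs v) + \<delta>) / pa_c m \<delta> t j
      else 0)"

definition pa_next :: "nat \<Rightarrow> real \<Rightarrow> nat list \<Rightarrow> nat pmf" where
  "pa_next m \<delta> xs = embed_pmf (pa_next_weight m \<delta> xs)"

fun pa_hist :: "nat \<Rightarrow> real \<Rightarrow> nat \<Rightarrow> nat list pmf" where
  "pa_hist m \<delta> 0 = return_pmf []"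
| "pa_hist m \<delta> (Suc n) =
     bind_pmf (pa_hist m \<delta> n) (\<lambda>xs. map_pmf (\<lambda>v. xs @ [v]) (pa_next m \<delta> xs))"

definition PA :: "nat \<Rightarrow> real \<Rightarrow> nat \<Rightarrow> nat list pmf" where
  "PA m \<delta> t = pa_hist m \<delta> (m * t)"

definition pa_adj :: "nat \<Rightarrow> nat list \<Rightarrow> nat \<Rightarrow> nat \<Rightarrow> bool" where
  "pa_adj m xs u w \<longleftrightarrow> (\<exists>i < length xs. {pa_src m i, xs ! i} = {u, w})"

definition pa_ball :: "nat \<Rightarrow> nat list \<Rightarrow> nat \<Rightarrow> nat \<Rightarrow> nat set" where
  "pa_ball m xs k v = {w. \<exists>l \<le> k. (v, w) \<in> ({(u, u'). pa_adj m xs u u'} ^^ l)}"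

definition has_self_loop_in :: "nat \<Rightarrow> nat list \<Rightarrow> nat set \<Rightarrow> bool" where
  "has_self_loop_in m xs U \<longleftrightarrow> (\<exists>i < length xs. pa_src m i = xs ! i \<and> xs ! i \<in> U)"

definition has_multi_edge_in :: "nat \<Rightarrow> nat list \<Rightarrow> nat set \<Rightarrow> bool" where
  "has_multi_edge_in m xs U \<longleftrightarrow>
     (\<exists>i < length xs. \<exists>i' < length xs. i \<noteq> i' \<and> pa_src m i \<in> U \<and> xs ! i \<in> U \<and>
        {pa_src m i, xs ! i} = {pa_src m i', xs ! i'})"

definition has_cycle_in :: "nat \<Rightarrow> nat list \<Rightarrow> nat set \<Rightarrow> bool" where
  "has_cycle_in m xs U \<longleftrightarrow>
     (\<exists>cs. length cs \<ge> 3 \<and> distinct cs \<and> set cs \<subseteq> U \<and>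
        (\<forall>i < length cs - 1. pa_adj m xs (cs ! i) (cs ! Suc i)) \<and>
        pa_adj m xs (last cs) (hd cs))"

text \<open>Minimally-k-connected vertex of PA_t (xs = history of length m*t).
  [x] = {1..floor x}, so v \<in> [t]\[t/2] means t div 2 < v \<le> t, and
  i \<in> [t/2]\[t/4] means t div 4 < i \<le> t div 2.\<close>
definition min_k_connected :: "nat \<Rightarrow> nat \<Rightarrow> nat list \<Rightarrow> nat \<Rightarrow> nat \<Rightarrow> bool" where
  "min_k_connected m t xs k v \<longleftrightarrow>
     t div 2 < v \<and> v \<le> t \<and> pa_deg m xs v = m \<and>
     (\<forall>i \<in> pa_ball m xs k v. i \<noteq> v \<longrightarrow> t div 4 < i \<and> i \<le> t div 2 \<and> pa_deg m xs i = m + 1) \<and>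
     \<not> has_self_loop_in m xs (pa_ball m xs k v) \<and>
     \<not> has_multi_edge_in m xs (pa_ball m xs k v) \<and>
     \<not> has_cycle_in m xs (pa_ball m xs k v)"

definition M_count :: "nat \<Rightarrow> nat \<Rightarrow> nat list \<Rightarrow> nat \<Rightarrow> nat" where
  "M_count m t xs k = card {v. min_k_connected m t xs k v}"

end

theory Submission
  imports Defs "HOL-Real_Asymp.Real_Asymp"
begin
lemma src_iff: assumes "m > 0"
  shows "pa_src m i = v \<longleftrightarrow> v \<ge> 1 \<and> m * (v-1) \<le> i \<and> i < m * v"
proof
  assume "pa_src m i = v"
  then have v: "v = i div m + 1" unfolding pa_src_def by simp
  have e: "m * (i div m) + i mod m = i" by simp
  have "i mod m < m" using assms by simp
  then have "i < m * (i div m) + m" "m * (i div m) \<le> i" using e by linarith+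
  then show "v \<ge> 1 \<and> m * (v-1) \<le> i \<and> i < m * v" using v by (simp add: algebra_simps)
next
  assume h: "v \<ge> 1 \<and> m * (v-1) \<le> i \<and> i < m * v"
  then obtain u where u: "v = Suc u" by (cases v) auto
  have "i div m = u" using h assms unfolding u
    by (intro div_nat_eqI) (auto simp: algebra_simps mult.commute)
  then show "pa_src m i = v" using u unfolding pa_src_def by simp
qed

lemma src_set_eq: assumes "m > 0" "v \<ge> 1"
  shows "{i. i < n \<and> pa_src m i = v} = {m * (v-1)..<min n (m * v)}"
  using src_iff[OF assms(1)] assms by auto

lemma card_src_le: assumes "m > 0" shows "card {i. i < n \<and> pa_src m i = v} \<le> m"
proof (cases "v \<ge> 1")
  case True
  have "m * v - m * (v-1) = m" using True by (simp add: diff_mult_distrib2)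
  moreover have "min n (m * v) - m * (v-1) \<le> m * v - m * (v-1)" by (simp add: diff_le_mono)
  ultimately show ?thesis using src_set_eq[OF assms True, of n] by simp
next
  case False
  then have e: "{i. i < n \<and> pa_src m i = v} = {}" unfolding pa_src_def by auto
  show ?thesis unfolding e by simp
qed
lemma card_src_full: assumes "m > 0" "v \<ge> 1" "m * v \<le> n" shows "card {i. i < n \<and> pa_src m i = v} = m"
proof -
  have "m * v - m * (v-1) = m" using assms by (simp add: diff_mult_distrib2)
  then show ?thesis using src_set_eq[OF assms(1,2)] assms by (simp add: min_def)
qed

lemma card_src_last: assumes "m > 0"
  shows "card {i. i < n \<and> pa_src m i = n div m + 1} = n mod m"
proof -
  have e: "m * (n div m) + n mod m = n" by simp
  have "n mod m < m" using assms by simp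
  then have "n < m * (n div m) + m" using e by linarith
  then have "n < m * (n div m + 1)" by (simp add: algebra_simps)
  then have "min n (m * (n div m + 1)) = n" by simp
  then show ?thesis using src_set_eq[OF assms, of "n div m + 1" n]
    by (simp add: minus_mult_div_eq_mod)
qed

lemma sum_card_fibres: assumes "finite V" "\<And>i. i < n \<Longrightarrow> f i \<in> V"
  shows "(\<Sum>v\<in>V. card {i. i < n \<and> f i = v}) = n"
proof -
  have e: "{..<n} = (\<Union>v\<in>V. {i. i < n \<and> f i = v})" using assms by auto
  have "card (\<Union>v\<in>V. {i. i < n \<and> f i = v}) = (\<Sum>v\<in>V. card {i. i < n \<and> f i = v})"
    by (rule card_UN_disjoint) (use assms in auto)
  then have "card {..<n} = (\<Sum>v\<in>V. card {i. i < n \<and> f i = v})" using e by simp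
  then show ?thesis by simp
qed

definition hist_ok :: "nat \<Rightarrow> nat \<Rightarrow> nat list \<Rightarrow> bool" where
  "hist_ok m n xs \<longleftrightarrow> length xs = n \<and> (\<forall>i<n. 1 \<le> xs ! i \<and> xs ! i \<le> pa_src m i)"

lemma src_le: "i < n \<Longrightarrow> pa_src m i \<le> n div m + 1"
  unfolding pa_src_def by (simp add: div_le_mono)

lemma sum_deg: assumes "hist_ok m n xs" "m > 0"
  shows "(\<Sum>v\<in>{1..n div m + 1}. pa_deg m xs v) = 2 * n"
proof -
  have l: "length xs = n" using assms unfolding hist_ok_def by simp
  have a: "(\<Sum>v\<in>{1..n div m + 1}. card {i. i < n \<and> xs ! i = v}) = n"
    apply (rule sum_card_fibres) using assms src_le[of _ n m] unfolding hist_ok_def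
    by (auto intro: order_trans)
  have b: "(\<Sum>v\<in>{1..n div m + 1}. card {i. i < n \<and> pa_src m i = v}) = n"
    apply (rule sum_card_fibres) using src_le[of _ n m] by (auto simp: pa_src_def)
  show ?thesis unfolding pa_deg_def l sum.distrib a b by simp
qed

locale pa =
  fixes m :: nat and \<delta> :: real
  assumes m2: "m \<ge> 2" and dl: "- real m < \<delta>" and du: "\<delta> < 0"
begin

lemma mpos: "m > 0" using m2 by simp

lemma dm: "0 < 1 + \<delta> / real m" "\<delta> / real m < 0" "1 < 2 + \<delta> / real m"
proof -
  have "- 1 < \<delta> / real m" using dl mpos by (simp add: field_simps)
  then show "0 < 1 + \<delta> / real m" "1 < 2 + \<delta> / real m" by linarith+
  show "\<delta> / real m < 0" by (meson divide_neg_pos du of_nat_0_less_iff mpos)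
qed

lemma c_eq: "pa_c m \<delta> (n div m + 1) (n mod m + 1) = real n * (2 + \<delta> / real m) + 1 + \<delta> / real m"
  unfolding pa_c_def by simp

lemma c_pos: "pa_c m \<delta> (n div m + 1) (n mod m + 1) > 0"
proof -
  have "real n * (2 + \<delta> / real m) \<ge> 0" using dm by simp
  then show ?thesis unfolding c_eq using dm by linarith
qed

lemma weight_eq: "pa_next_weight m \<delta> xs v =
  (let t = length xs div m + 1; j = length xs mod m + 1 in
      if t = 1 then (if v = 1 then 1 else 0)
      else if v = t then (real (pa_deg m xs v) + 1 + real j * \<delta> / real m) / pa_c m \<delta> t j
      else if 1 \<le> v \<and> v < t then (real (pa_deg m xs v) + \<delta>) / pa_c m \<delta> t j
      else 0)"
  unfolding pa_next_weight_def by simp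

lemma weight_nonneg: assumes "hist_ok m n xs" shows "pa_next_weight m \<delta> xs v \<ge> 0"
proof -
  have l: "length xs = n" using assms unfolding hist_ok_def by simp
  define t where "t = n div m + 1"
  define j where "j = n mod m + 1"
  have cp: "pa_c m \<delta> t j > 0" using c_pos unfolding t_def j_def .
  show ?thesis
  proof (cases "t = 1")
    case True then show ?thesis unfolding pa_next_weight_def l t_def[symmetric] by simp
  next
    case False
    show ?thesis
    proof (cases "v = t")
      case True
      have "card {i. i < length xs \<and> pa_src m i = v} = n mod m"
        using card_src_last[OF mpos, of n] True l unfolding t_def by simp
      then have "real (pa_deg m xs v) \<ge> real j - 1" unfolding pa_deg_def j_def by simp
      moreover have "real j * (1 + \<delta> / real m) > 0" using dm unfolding j_def by simp
      ultimately have "real (pa_deg m xs v) + 1 + real j * \<delta> / real m \<ge> 0"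
        by (simp add: algebra_simps)
      then show ?thesis using cp False True unfolding pa_next_weight_def l t_def[symmetric] j_def[symmetric]
        by simp
    next
      case False2: False
      show ?thesis
      proof (cases "1 \<le> v \<and> v < t")
        case True
        have "v \<le> n div m" using True unfolding t_def by simp
        then have "m * v \<le> m * (n div m)" by simp
        moreover have "m * (n div m) \<le> n" by simp
        ultimately have "m * v \<le> n" by linarith
        then have "card {i. i < length xs \<and> pa_src m i = v} = m"
          using card_src_full[OF mpos, of v n] True l by simp
        then have "real (pa_deg m xs v) \<ge> real m" unfolding pa_deg_def by simp
        then have "real (pa_deg m xs v) + \<delta> \<ge> 0" using dl by linarith
        then show ?thesis using cp False False2 True unfolding pa_next_weight_def l t_def[symmetric] j_def[symmetric]
          by simp
      next
        case False3: False
        then show ?thesis using False False2 unfolding pa_next_weight_def l t_def[symmetric] j_def[symmetric]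
          by (auto simp: Let_def)
      qed
    qed
  qed
qed

end

context pa begin

lemma weight_zero: assumes "v < 1 \<or> v > length xs div m + 1"
  shows "pa_next_weight m \<delta> xs v = 0"
  using assms unfolding pa_next_weight_def by (auto simp: Let_def)

lemma weight_sum: assumes "hist_ok m n xs"
  shows "(\<Sum>v\<in>{1..n div m + 1}. pa_next_weight m \<delta> xs v) = 1"
proof -
  have l: "length xs = n" using assms unfolding hist_ok_def by simp
  define t where "t = n div m + 1"
  define j where "j = n mod m + 1"
  define c where "c = pa_c m \<delta> t j"
  have cp: "c > 0" using c_pos unfolding c_def t_def j_def .
  have ceq: "c = real n * (2 + \<delta> / real m) + 1 + \<delta> / real m" using c_eq unfolding c_def t_def j_def .
  have nt: "real n = real m * (real t - 1) + (real j - 1)"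
  proof -
    have "n = m * (n div m) + n mod m" by simp
    then show ?thesis unfolding t_def j_def by (metis add_diff_cancel_right' of_nat_1 of_nat_add of_nat_mult)
  qed
  show ?thesis
  proof (cases "t = 1")
    case True
    then show ?thesis unfolding t_def[symmetric] pa_next_weight_def l by simp
  next
    case False
    then have t2: "t \<ge> 2" unfolding t_def by simp
    have split: "{1..t} = insert t {1..<t}" using t2 by auto
    have w1: "pa_next_weight m \<delta> xs v = (real (pa_deg m xs v) + \<delta>) / c" if "v \<in> {1..<t}" for v
      using that False unfolding pa_next_weight_def l t_def[symmetric] j_def[symmetric] c_def by auto
    have w2: "pa_next_weight m \<delta> xs t = (real (pa_deg m xs t) + 1 + real j * \<delta> / real m) / c"
      using False unfolding pa_next_weight_def l t_def[symmetric] j_def[symmetric] c_def by auto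
    have sd: "(\<Sum>v\<in>{1..t}. real (pa_deg m xs v)) = 2 * real n"
      using sum_deg[OF assms mpos] unfolding t_def[symmetric] by (metis of_nat_mult of_nat_numeral of_nat_sum)
    have sd2: "(\<Sum>v\<in>{1..<t}. real (pa_deg m xs v)) + real (pa_deg m xs t) = 2 * real n"
      using sd unfolding split by simp
    have "(\<Sum>v\<in>{1..t}. pa_next_weight m \<delta> xs v) =
        (\<Sum>v\<in>{1..<t}. (real (pa_deg m xs v) + \<delta>) / c) + (real (pa_deg m xs t) + 1 + real j * \<delta> / real m) / c"
      unfolding split using w1 w2 by simp
    also have "\<dots> = ((\<Sum>v\<in>{1..<t}. real (pa_deg m xs v)) + (real t - 1) * \<delta> + (real (pa_deg m xs t) + 1 + real j * \<delta> / real m)) / c"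
      using t2 by (simp add: sum_divide_distrib[symmetric] sum.distrib add_divide_distrib of_nat_diff)
    also have "\<dots> = (2 * real n + (real t - 1) * \<delta> + 1 + real j * \<delta> / real m) / c"
      using sd2 by (simp add: algebra_simps)
    also have "\<dots> = 1"
    proof -
      have "2 * real n + (real t - 1) * \<delta> + 1 + real j * \<delta> / real m = c"
        unfolding ceq nt using mpos by (simp add: field_simps)
      then show ?thesis using cp by simp
    qed
    finally show ?thesis unfolding t_def .
  qed
qed

lemma weight_integral: assumes "hist_ok m n xs"
  shows "(\<integral>\<^sup>+ v. ennreal (pa_next_weight m \<delta> xs v) \<partial>count_space UNIV) = 1"
proof -
  have l: "length xs = n" using assms unfolding hist_ok_def by simp
  have "(\<integral>\<^sup>+ v. ennreal (pa_next_weight m \<delta> xs v) \<partial>count_space UNIV) =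
      (\<Sum>v\<in>{1..n div m + 1}. ennreal (pa_next_weight m \<delta> xs v))"
    by (rule nn_integral_count_space') (use weight_zero l in auto)
  also have "\<dots> = ennreal (\<Sum>v\<in>{1..n div m + 1}. pa_next_weight m \<delta> xs v)"
    by (rule sum_ennreal) (use weight_nonneg[OF assms] in auto)
  finally show ?thesis using weight_sum[OF assms] by simp
qed

lemma pmf_next: assumes "hist_ok m n xs"
  shows "pmf (pa_next m \<delta> xs) v = pa_next_weight m \<delta> xs v"
  unfolding pa_next_def using weight_nonneg[OF assms] weight_integral[OF assms]
  by (rule pmf_embed_pmf)

lemma set_next: assumes "hist_ok m n xs"
  shows "set_pmf (pa_next m \<delta> xs) \<subseteq> {1..n div m + 1}"
proof -
  have l: "length xs = n" using assms unfolding hist_ok_def by simp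
  have "set_pmf (pa_next m \<delta> xs) = {v. pa_next_weight m \<delta> xs v \<noteq> 0}"
    unfolding pa_next_def using weight_nonneg[OF assms] weight_integral[OF assms]
    by (rule set_embed_pmf)
  moreover have "x \<in> {1..n div m + 1}" if "pa_next_weight m \<delta> xs x \<noteq> 0" for x
    using that weight_zero[of x xs] l by (cases "x < 1 \<or> x > n div m + 1") auto
  ultimately show ?thesis by auto
qed

lemma hist_support: "xs \<in> set_pmf (pa_hist m \<delta> n) \<Longrightarrow> hist_ok m n xs"
proof (induction n arbitrary: xs)
  case 0
  then show ?case by (simp add: hist_ok_def)
next
  case (Suc n)
  from Suc.prems obtain ys v where ys: "ys \<in> set_pmf (pa_hist m \<delta> n)" and v: "v \<in> set_pmf (pa_next m \<delta> ys)"
    and xs: "xs = ys @ [v]" by auto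
  have ok: "hist_ok m n ys" using Suc.IH ys .
  have "v \<in> {1..n div m + 1}" using set_next[OF ok] v by auto
  then have "1 \<le> v \<and> v \<le> pa_src m n" unfolding pa_src_def by simp
  then show ?case using ok unfolding xs hist_ok_def by (auto simp: nth_append less_Suc_eq)
qed

end

context pa begin

lemma prob_prod_e:
  fixes A :: "nat \<Rightarrow> nat set" and b :: "nat \<Rightarrow> real"
  assumes b0: "\<And>i. b i \<ge> 0"
  and step: "\<And>i xs. i < n \<Longrightarrow> xs \<in> set_pmf (pa_hist m \<delta> i) \<Longrightarrow> (\<forall>i'<i. xs ! i' \<in> A i') \<Longrightarrow>
       measure (pa_next m \<delta> xs) (A i) \<ge> b i"
  shows "emeasure (pa_hist m \<delta> n) {xs. \<forall>i<n. xs ! i \<in> A i} \<ge> ennreal (\<Prod>i<n. b i)"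
  using step
proof (induction n)
  case 0
  have "{xs. \<forall>i<0. xs ! i \<in> A i} = UNIV" by simp
  then show ?case by (simp add: measure_pmf.emeasure_eq_measure)
next
  case (Suc n)
  define G where "G = {xs. \<forall>i<n. xs ! i \<in> A i}"
  define G' where "G' = {xs. \<forall>i<Suc n. xs ! i \<in> A i}"
  have IH: "emeasure (pa_hist m \<delta> n) G \<ge> ennreal (\<Prod>i<n. b i)"
    unfolding G_def using Suc.prems by (intro Suc.IH) auto
  have pt: "emeasure (measure_pmf (map_pmf (\<lambda>v. ys @ [v]) (pa_next m \<delta> ys))) G' \<ge> indicator G ys * ennreal (b n)"
    if ys: "ys \<in> set_pmf (pa_hist m \<delta> n)" for ys
  proof (cases "ys \<in> G")
    case True
    have l: "length ys = n" using hist_support[OF ys] unfolding hist_ok_def by simp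
    have pre: "(\<lambda>v. ys @ [v]) -` G' = A n"
      using True l unfolding G_def G'_def by (auto simp: nth_append less_Suc_eq)
    have "b n \<le> measure (pa_next m \<delta> ys) (A n)"
      using Suc.prems[of n ys] ys True unfolding G_def by simp
    then have "ennreal (b n) \<le> emeasure (measure_pmf (pa_next m \<delta> ys)) (A n)"
      by (simp add: measure_pmf.emeasure_eq_measure)
    then show ?thesis using True by (simp add: emeasure_map_pmf pre)
  next
    case False
    then show ?thesis by simp
  qed
  have "ennreal (\<Prod>i<Suc n. b i) = ennreal (b n) * ennreal (\<Prod>i<n. b i)"
    using b0 by (simp add: ennreal_mult' prod_nonneg mult.commute)
  also have "\<dots> \<le> ennreal (b n) * emeasure (pa_hist m \<delta> n) G"
    using IH by (rule mult_left_mono) simp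
  also have "\<dots> = (\<integral>\<^sup>+ ys. indicator G ys * ennreal (b n) \<partial>measure_pmf (pa_hist m \<delta> n))"
    by (subst mult.commute) (simp add: nn_integral_cmult_indicator)
  also have "\<dots> \<le> (\<integral>\<^sup>+ ys. emeasure (measure_pmf (map_pmf (\<lambda>v. ys @ [v]) (pa_next m \<delta> ys))) G' \<partial>measure_pmf (pa_hist m \<delta> n))"
    by (rule nn_integral_mono_AE) (use pt in \<open>auto intro!: AE_pmfI\<close>)
  also have "\<dots> = emeasure (pa_hist m \<delta> (Suc n)) G'"
    by (simp only: pa_hist.simps emeasure_bind_pmf)
  finally show ?case unfolding G'_def .
qed

lemma prob_prod:
  fixes A :: "nat \<Rightarrow> nat set" and b :: "nat \<Rightarrow> real"
  assumes b0: "\<And>i. b i \<ge> 0"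
  and step: "\<And>i xs. i < n \<Longrightarrow> xs \<in> set_pmf (pa_hist m \<delta> i) \<Longrightarrow> (\<forall>i'<i. xs ! i' \<in> A i') \<Longrightarrow>
       measure (pa_next m \<delta> xs) (A i) \<ge> b i"
  shows "measure (pa_hist m \<delta> n) {xs. \<forall>i<n. xs ! i \<in> A i} \<ge> (\<Prod>i<n. b i)"
  using prob_prod_e[OF assms] b0
  by (simp add: measure_pmf.emeasure_eq_measure prod_nonneg)

end

fun Snum :: "nat \<Rightarrow> nat \<Rightarrow> nat" where
  "Snum m 0 = 0"
| "Snum m (Suc d) = m * Snum m d + 1"

function dep :: "nat \<Rightarrow> nat \<Rightarrow> nat" where
  "dep m q = (if q = 0 \<or> m = 0 then 0 else Suc (dep m ((q - 1) div m)))"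
  by auto
termination
  by (relation "Wellfounded.measure snd") (auto intro: le_less_trans[OF div_le_dividend])

declare dep.simps[simp del]

lemma le_mult_self: "0 < m \<Longrightarrow> (x::nat) \<le> m * x"
  by (cases m) auto

lemma Snum_mono: "m > 0 \<Longrightarrow> d \<le> d' \<Longrightarrow> Snum m d \<le> Snum m d'"
proof (induction d' arbitrary: d)
  case 0 then show ?case by simp
next
  case (Suc d')
  have "Snum m d' \<le> m * Snum m d'" using le_mult_self Suc.prems by blast
  then have "Snum m d' \<le> m * Snum m d' + 1" by linarith
  show ?case
  proof (cases "d = Suc d'")
    case True then show ?thesis by simp
  next
    case False
    then have "d \<le> d'" using Suc.prems by simp
    then have "Snum m d \<le> Snum m d'" using Suc.IH Suc.prems by blast
    then show ?thesis using \<open>Snum m d' \<le> m * Snum m d' + 1\<close> by simp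
  qed
qed

lemma Snum_strict: "m > 0 \<Longrightarrow> d < d' \<Longrightarrow> Snum m d < Snum m d'"
proof -
  assume m: "m > 0" and d: "d < d'"
  have "Snum m d \<le> m * Snum m d" using le_mult_self m by blast
  then have "Snum m d < Snum m (Suc d)" by (simp only: Snum.simps)
  also have "\<dots> \<le> Snum m d'" using Snum_mono[OF m, of "Suc d" d'] d by simp
  finally show ?thesis .
qed

lemma dep_bounds: assumes "m > 0"
  shows "Snum m (dep m q) \<le> q \<and> q < Snum m (Suc (dep m q))"
proof (induction q rule: less_induct)
  case (less q)
  show ?case
  proof (cases "q = 0")
    case True then show ?thesis by (simp add: dep.simps)
  next
    case False
    define p where "p = (q - 1) div m"
    have pq: "p < q" unfolding p_def using False by (simp add: le_less_trans[OF div_le_dividend])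
    have dq: "dep m q = Suc (dep m p)" using False assms by (subst dep.simps) (simp add: p_def)
    have ih: "Snum m (dep m p) \<le> p" "p < Snum m (Suc (dep m p))" using less.IH[OF pq] assms by auto
    have e: "m * p + (q - 1) mod m = q - 1" unfolding p_def by simp
    have r: "(q - 1) mod m < m" using assms by simp
    have "m * Snum m (dep m p) \<le> m * p" using ih(1) by simp
    then have "m * Snum m (dep m p) + 1 \<le> q" using e False by linarith
    then have lo: "Snum m (dep m q) \<le> q" using dq by simp
    define S1 where "S1 = Snum m (Suc (dep m p))"
    have "p + 1 \<le> S1" using ih(2) unfolding S1_def by simp
    then have "m * (p + 1) \<le> m * S1" by (rule mult_le_mono2)
    then have "m * p + m \<le> m * S1" by (simp add: algebra_simps)
    then have "q < m * S1 + 1" using e r False by linarith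
    then have "q < m * Snum m (Suc (dep m p)) + 1" unfolding S1_def .
    then have hi: "q < Snum m (Suc (dep m q))" using dq by simp
    show ?thesis using lo hi by simp
  qed
qed

lemma dep_child: assumes "m > 0" "j < m" shows "dep m (m * q + 1 + j) = Suc (dep m q)"
proof -
  have "(m * q + 1 + j - 1) div m = q" using assms by simp
  then show ?thesis using assms by (subst dep.simps) simp
qed

locale tree = pa +
  fixes t k v :: nat and lab :: "nat \<Rightarrow> nat"
  assumes root: "lab 0 = v" and vlo: "t div 2 < v" and vhi: "v \<le> t"
  and rng: "\<And>q. 0 < q \<Longrightarrow> q < Snum m (Suc k) \<Longrightarrow> t div 4 < lab q \<and> lab q \<le> t div 2"
  and ord: "\<And>q q'. q < q' \<Longrightarrow> q' < Snum m (Suc k) \<Longrightarrow> lab q' < lab q"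
begin

abbreviation "I \<equiv> Snum m k"
abbreviation "N \<equiv> Snum m (Suc k)"
abbreviation "F \<equiv> lab ` {0..<N}"

definition good :: "nat \<Rightarrow> nat \<Rightarrow> bool" where
  "good i w \<longleftrightarrow> (\<forall>q<I. lab q = pa_src m i \<longrightarrow> w = lab (m * q + 1 + i mod m)) \<and>
      ((\<forall>q<I. lab q \<noteq> pa_src m i) \<longrightarrow> w \<notin> F)"

definition Ev :: "nat list set" where
  "Ev = {xs. \<forall>i<m * t. xs ! i \<in> {w. good i w}}"

lemma N_eq: "N = m * I + 1" by simp

lemma I_lt_N: "I < N"
proof -
  have "I \<le> m * I" using le_mult_self mpos by blast
  then show ?thesis by (simp only: Snum.simps)
qed

lemma child_lt: "q < I \<Longrightarrow> j < m \<Longrightarrow> m * q + 1 + j < N"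
proof -
  assume "q < I" "j < m"
  then have "m * q + m \<le> m * I" by (metis Suc_leI add.commute mult_Suc_right mult_le_mono2)
  then show ?thesis using \<open>j < m\<close> by simp
qed

lemma lab_inj: "q < N \<Longrightarrow> q' < N \<Longrightarrow> lab q = lab q' \<Longrightarrow> q = q'"
  using ord by (metis less_irrefl nat_neq_iff)

lemma lab_le_t: "q < N \<Longrightarrow> lab q \<le> t"
  using rng[of q] root vhi by (cases "q = 0") auto

lemma lab_ge1: "q < N \<Longrightarrow> 1 \<le> lab q"
  using rng[of q] root vlo by (cases "q = 0") auto

lemma parent_lt: assumes "0 < c" "c < N" shows "(c - 1) div m < I"
proof (rule ccontr)
  assume "\<not> (c - 1) div m < I"
  then have "m * I \<le> m * ((c - 1) div m)" by simp
  also have "\<dots> \<le> c - 1" by simp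
  finally show False using assms by simp
qed

lemma parent_eq: "0 < c \<Longrightarrow> m * ((c - 1) div m) + 1 + (c - 1) mod m = c"
  by simp

lemma src_decomp: "m * (pa_src m i - 1) + i mod m = i"
  unfolding pa_src_def by simp

lemma target_lemma:
  assumes xs: "xs \<in> Ev" and i: "i < m * t" and c: "c < N" and e: "xs ! i = lab c"
  shows "0 < c \<and> pa_src m i = lab ((c - 1) div m) \<and> i mod m = (c - 1) mod m"
proof -
  have g: "good i (xs ! i)" using xs i unfolding Ev_def by auto
  show ?thesis
  proof (cases "\<exists>q<I. lab q = pa_src m i")
    case True
    then obtain q where q: "q < I" "lab q = pa_src m i" by auto
    have "xs ! i = lab (m * q + 1 + i mod m)" using g q unfolding good_def by auto
    then have "c = m * q + 1 + i mod m"
      using lab_inj[OF c child_lt[OF q(1)]] e mpos by simp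
    then show ?thesis using q mpos by simp
  next
    case False
    then have "xs ! i \<notin> F" using g unfolding good_def by auto
    then show ?thesis using e c by auto
  qed
qed

definition pe :: "nat \<Rightarrow> nat" where
  "pe c = m * (lab ((c - 1) div m) - 1) + (c - 1) mod m"

lemma pe_props: assumes "0 < c" "c < N"
  shows "pa_src m (pe c) = lab ((c - 1) div m)" "pe c mod m = (c - 1) mod m" "pe c < m * t"
proof -
  define p where "p = (c - 1) div m"
  have p: "p < I" using parent_lt[OF assms] unfolding p_def .
  have pN: "p < N" using p I_lt_N by simp
  have l1: "1 \<le> lab p" "lab p \<le> t" using lab_ge1[OF pN] lab_le_t[OF pN] by auto
  have r: "(c - 1) mod m < m" using mpos by simp
  have mm: "m * lab p = m * (lab p - 1) + m" using l1
    by (metis add.commute le_add_diff_inverse2 mult_Suc_right plus_1_eq_Suc)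
  show s: "pa_src m (pe c) = lab p"
    unfolding src_iff[OF mpos] pe_def p_def[symmetric] using l1 r mm by linarith
  show "pe c mod m = (c - 1) mod m" unfolding pe_def using r by simp
  have "pe c < m * (lab p - 1) + m" unfolding pe_def p_def[symmetric] using r by simp
  also have "\<dots> = m * lab p" using l1 by (metis add.commute le_add_diff_inverse2 mult_Suc_right plus_1_eq_Suc)
  also have "\<dots> \<le> m * t" using l1 by simp
  finally show "pe c < m * t" .
qed

lemma target_unique:
  assumes xs: "xs \<in> Ev" and i: "i < m * t" and c: "c < N" and e: "xs ! i = lab c"
  shows "0 < c \<and> i = pe c"
proof -
  have h: "0 < c" "pa_src m i = lab ((c - 1) div m)" "i mod m = (c - 1) mod m"
    using target_lemma[OF assms] by auto
  have "i = m * (pa_src m i - 1) + i mod m" using src_decomp by simp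
  then show ?thesis using h unfolding pe_def by simp
qed

lemma pe_target: assumes xs: "xs \<in> Ev" "0 < c" "c < N" shows "xs ! pe c = lab c"
proof -
  define p where "p = (c - 1) div m"
  have p: "p < I" using parent_lt[OF assms(2,3)] unfolding p_def .
  have g: "good (pe c) (xs ! pe c)" using xs pe_props[OF assms(2,3)] unfolding Ev_def by auto
  have "xs ! pe c = lab (m * p + 1 + pe c mod m)"
    using g p pe_props[OF assms(2,3)] unfolding good_def p_def by auto
  also have "m * p + 1 + pe c mod m = c" using pe_props[OF assms(2,3)] assms unfolding p_def by simp
  finally show ?thesis .
qed

end

lemma pa_adj_sym: "pa_adj m xs u w = pa_adj m xs w u"
  unfolding pa_adj_def by (simp add: insert_commute)

lemma list_preimage: "set cs \<subseteq> f ` A \<Longrightarrow> \<exists>qs. cs = map f qs \<and> set qs \<subseteq> A"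
proof (induction cs)
  case Nil then show ?case by simp
next
  case (Cons c cs)
  then obtain qs where "cs = map f qs" "set qs \<subseteq> A" by auto
  moreover obtain q where "q \<in> A" "c = f q" using Cons.prems by auto
  ultimately show ?case by (intro exI[of _ "q # qs"]) auto
qed

context tree begin

lemma parent_less: "0 < c \<Longrightarrow> (c - 1) div m < c"
  by (simp add: le_less_trans[OF div_le_dividend])

lemma parent_N: "0 < c \<Longrightarrow> c < N \<Longrightarrow> (c - 1) div m < N"
  using parent_less by (meson less_trans)

context
  fixes xs assumes xs: "xs \<in> Ev" and len: "length xs = m * t"
begin

lemma no_target_root: assumes i: "i < m * t" shows "xs ! i \<noteq> v"
proof
  assume "xs ! i = v"
  then have "xs ! i = lab 0" using root by simp
  moreover have "0 < N" using I_lt_N by simp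
  ultimately show False using target_unique[OF xs i] by blast
qed

lemma deg_root: "pa_deg m xs v = m"
proof -
  have "{i. i < length xs \<and> xs ! i = v} = {}" using no_target_root len by auto
  moreover have "card {i. i < length xs \<and> pa_src m i = v} = m"
    using card_src_full[OF mpos, of v "m * t"] vhi vlo len by simp
  ultimately show ?thesis unfolding pa_deg_def by simp
qed

lemma deg_node: assumes "0 < c" "c < N" shows "pa_deg m xs (lab c) = m + 1"
proof -
  have "{i. i < length xs \<and> xs ! i = lab c} = {pe c}"
  proof (intro set_eqI iffI)
    fix i assume "i \<in> {i. i < length xs \<and> xs ! i = lab c}"
    then have "i < m * t" "xs ! i = lab c" using len by auto
    then show "i \<in> {pe c}" using target_unique[OF xs _ assms(2)] by blast
  next
    fix i assume "i \<in> {pe c}"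
    then show "i \<in> {i. i < length xs \<and> xs ! i = lab c}"
      using pe_target[OF xs assms] pe_props(3)[OF assms] len by simp
  qed
  moreover have "card {i. i < length xs \<and> pa_src m i = lab c} = m"
    using card_src_full[OF mpos, of "lab c" "m * t"] lab_ge1[OF assms(2)] lab_le_t[OF assms(2)] len by simp
  ultimately show ?thesis unfolding pa_deg_def by simp
qed

lemma edge_child: assumes "q < I" "j < m" shows "pa_adj m xs (lab q) (lab (m * q + 1 + j))"
proof -
  define c where "c = m * q + 1 + j"
  have c: "0 < c" "c < N" using child_lt[OF assms] unfolding c_def by auto
  have p: "(c - 1) div m = q" using assms unfolding c_def by simp
  have "pa_src m (pe c) = lab q" "xs ! pe c = lab c" "pe c < length xs"
    using pe_props[OF c] pe_target[OF xs c] len p by auto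
  then show ?thesis unfolding pa_adj_def c_def[symmetric] by (intro exI[of _ "pe c"]) simp
qed

lemma nbr: assumes q: "q < I" and a: "pa_adj m xs (lab q) w"
  shows "(\<exists>j<m. w = lab (m * q + 1 + j)) \<or> (0 < q \<and> w = lab ((q - 1) div m))"
proof -
  obtain i where i: "i < length xs" "{pa_src m i, xs ! i} = {lab q, w}" using a unfolding pa_adj_def by auto
  have qN: "q < N" using q I_lt_N by simp
  from i(2) consider "pa_src m i = lab q" "xs ! i = w" | "pa_src m i = w" "xs ! i = lab q"
    by (auto simp: doubleton_eq_iff)
  then show ?thesis
  proof cases
    case 1
    have g: "good i (xs ! i)" using xs i len unfolding Ev_def by auto
    then have "w = lab (m * q + 1 + i mod m)" using 1 q unfolding good_def by auto
    then show ?thesis using mod_less_divisor[OF mpos, of i] by blast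
  next
    case 2
    have "0 < q \<and> i = pe q" using target_unique[OF xs _ qN 2(2)] i len by auto
    then show ?thesis using pe_props[of q] qN 2 by auto
  qed
qed

lemma adjF: assumes "a < N" "b < N" "pa_adj m xs (lab a) (lab b)"
  shows "(0 < b \<and> a = (b - 1) div m) \<or> (0 < a \<and> b = (a - 1) div m)"
proof -
  obtain i where i: "i < length xs" "{pa_src m i, xs ! i} = {lab a, lab b}" using assms unfolding pa_adj_def by auto
  from i(2) consider "pa_src m i = lab a" "xs ! i = lab b" | "pa_src m i = lab b" "xs ! i = lab a"
    by (auto simp: doubleton_eq_iff)
  then show ?thesis
  proof cases
    case 1
    have h: "0 < b" "pa_src m i = lab ((b - 1) div m)" using target_lemma[OF xs _ assms(2) 1(2)] i len by auto
    then have "a = (b - 1) div m" using lab_inj[OF assms(1) parent_N[OF h(1) assms(2)]] 1 by simp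
    then show ?thesis using h by simp
  next
    case 2
    have h: "0 < a" "pa_src m i = lab ((a - 1) div m)" using target_lemma[OF xs _ assms(1) 2(2)] i len by auto
    then have "b = (a - 1) div m" using lab_inj[OF assms(2) parent_N[OF h(1) assms(1)]] 2 by simp
    then show ?thesis using h by simp
  qed
qed

abbreviation "R \<equiv> {(u, u'). pa_adj m xs u u'}"

lemma dep_lt_I: assumes "q < N" "dep m q < k" shows "q < I"
proof -
  have "q < Snum m (Suc (dep m q))" using dep_bounds[OF mpos] by simp
  also have "\<dots> \<le> I" using Snum_mono[OF mpos, of "Suc (dep m q)" k] assms(2) by simp
  finally show ?thesis .
qed

lemma dep_le_k: assumes "q < N" shows "dep m q \<le> k"
proof (rule ccontr)
  assume "\<not> dep m q \<le> k"
  then have "N \<le> Snum m (dep m q)" using Snum_mono[OF mpos, of "Suc k" "dep m q"] by simp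
  then show False using dep_bounds[OF mpos, of q] assms by simp
qed

lemma ball_sub: "l \<le> k \<Longrightarrow> (v, w) \<in> R ^^ l \<Longrightarrow> \<exists>q<N. dep m q \<le> l \<and> w = lab q"
proof (induction l arbitrary: w)
  case 0
  then show ?case using root I_lt_N by (intro exI[of _ 0]) (auto simp: dep.simps)
next
  case (Suc l)
  from Suc.prems(2) obtain u where u: "(v, u) \<in> R ^^ l" "(u, w) \<in> R" by auto
  obtain q where q: "q < N" "dep m q \<le> l" "u = lab q" using Suc.IH[OF _ u(1)] Suc.prems(1) by auto
  have qI: "q < I" using dep_lt_I[OF q(1)] q(2) Suc.prems(1) by simp
  have adj: "pa_adj m xs (lab q) w" using u(2) q(3) by simp
  from nbr[OF qI adj] show ?case
  proof
    assume "\<exists>j<m. w = lab (m * q + 1 + j)"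
    then obtain j where j: "j < m" "w = lab (m * q + 1 + j)" by auto
    show ?thesis using child_lt[OF qI j(1)] dep_child[OF mpos j(1), of q] q(2) j(2)
      by (intro exI[of _ "m * q + 1 + j"]) auto
  next
    assume h: "0 < q \<and> w = lab ((q - 1) div m)"
    have "dep m q = Suc (dep m ((q - 1) div m))" using h mpos by (subst dep.simps) simp
    then show ?thesis using h q parent_N[of q] by (intro exI[of _ "(q - 1) div m"]) auto
  qed
qed

lemma ball_sup: "q < N \<Longrightarrow> (v, lab q) \<in> R ^^ (dep m q)"
proof (induction q rule: less_induct)
  case (less q)
  show ?case
  proof (cases "q = 0")
    case True then show ?thesis using root by (simp add: dep.simps)
  next
    case False
    define p where "p = (q - 1) div m"
    have pq: "p < q" unfolding p_def using False parent_less by simp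
    have pI: "p < I" unfolding p_def using parent_lt False less.prems by simp
    have qe: "q = m * p + 1 + (q - 1) mod m" unfolding p_def using False by simp
    have r: "(q - 1) mod m < m" using mpos by simp
    have ih: "(v, lab p) \<in> R ^^ dep m p" using less.IH[OF pq] pq less.prems by simp
    have e: "(lab p, lab q) \<in> R" using edge_child[OF pI r] qe by simp
    have "dep m q = Suc (dep m p)" using False mpos unfolding p_def by (subst dep.simps) simp
    then show ?thesis using ih e by auto
  qed
qed

lemma ball_eq: "pa_ball m xs k v = F"
proof
  show "pa_ball m xs k v \<subseteq> F"
  proof
    fix w assume "w \<in> pa_ball m xs k v"
    then obtain l where l: "l \<le> k" "(v, w) \<in> R ^^ l" unfolding pa_ball_def by blast
    obtain q where "q < N" "w = lab q" using ball_sub[OF l] by blast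
    then show "w \<in> F" by simp
  qed
  show "F \<subseteq> pa_ball m xs k v"
  proof
    fix w assume "w \<in> F"
    then obtain q where q: "q < N" "w = lab q" by auto
    have "(v, w) \<in> R ^^ (dep m q)" using ball_sup[OF q(1)] q(2) by simp
    then show "w \<in> pa_ball m xs k v" unfolding pa_ball_def using dep_le_k[OF q(1)] by blast
  qed
qed

lemma no_loop: "\<not> has_self_loop_in m xs F"
proof
  assume "has_self_loop_in m xs F"
  then obtain i c where i: "i < length xs" "pa_src m i = xs ! i" "xs ! i = lab c" "c < N"
    unfolding has_self_loop_in_def by auto
  have h: "0 < c" "pa_src m i = lab ((c - 1) div m)" using target_lemma[OF xs _ i(4) i(3)] i len by auto
  have "(c - 1) div m = c" using lab_inj[OF parent_N[OF h(1) i(4)] i(4)] h i by simp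
  then show False using parent_less[OF h(1)] by simp
qed

lemma no_multi: "\<not> has_multi_edge_in m xs F"
proof
  assume "has_multi_edge_in m xs F"
  then obtain i i' c where i: "i < length xs" "i' < length xs" "i \<noteq> i'" "xs ! i = lab c" "c < N"
    and e: "{pa_src m i, xs ! i} = {pa_src m i', xs ! i'}"
    unfolding has_multi_edge_in_def by auto
  have h: "0 < c" "i = pe c" using target_unique[OF xs _ i(5) i(4)] i len by auto
  have s: "pa_src m i = lab ((c - 1) div m)" using pe_props[OF h(1) i(5)] h by simp
  from e consider "xs ! i' = xs ! i" | "xs ! i' = pa_src m i" "pa_src m i' = xs ! i"
    by (auto simp: doubleton_eq_iff)
  then show False
  proof cases
    case 1
    then have "i' = pe c" using target_unique[OF xs _ i(5)] i len by auto
    then show False using h i by simp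
  next
    case 2
    define p where "p = (c - 1) div m"
    have pN: "p < N" unfolding p_def using parent_N h i by simp
    have h2: "0 < p" "pa_src m i' = lab ((p - 1) div m)"
      using target_lemma[OF xs _ pN] 2 s i len unfolding p_def by auto
    have "(p - 1) div m = c" using lab_inj[OF parent_N[OF h2(1) pN] i(5)] h2 2 i by simp
    moreover have "(p - 1) div m < p" using parent_less h2 by simp
    moreover have "p < c" unfolding p_def using parent_less h by simp
    ultimately show False by simp
  qed
qed

lemma no_cycle: "\<not> has_cycle_in m xs F"
proof
  assume "has_cycle_in m xs F"
  then obtain cs where cs: "length cs \<ge> 3" "distinct cs" "set cs \<subseteq> F"
    "\<forall>i < length cs - 1. pa_adj m xs (cs ! i) (cs ! Suc i)" "pa_adj m xs (last cs) (hd cs)"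
    unfolding has_cycle_in_def by auto
  obtain qs where qs: "cs = map lab qs" "set qs \<subseteq> {0..<N}" using list_preimage[OF cs(3)] by auto
  define n where "n = length cs"
  have ln: "length qs = n" unfolding n_def qs by simp
  have n3: "n \<ge> 3" using cs unfolding n_def by simp
  have qN: "\<And>i. i < n \<Longrightarrow> qs ! i < N" using qs(2) ln nth_mem by fastforce
  have csi: "\<And>i. i < n \<Longrightarrow> cs ! i = lab (qs ! i)" using qs ln by simp
  have dq: "distinct qs" using cs(2) qs by (simp add: distinct_map)
  have adj: "pa_adj m xs (cs ! i) (cs ! Suc i)" if "Suc i < n" for i using cs(4) that unfolding n_def by auto
  have cne: "cs \<noteq> []" using n3 unfolding n_def by auto
  have adjl: "pa_adj m xs (cs ! (n - 1)) (cs ! 0)" using cs(5) last_conv_nth[OF cne] hd_conv_nth[OF cne]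
    unfolding n_def by simp
  define M where "M = Max (set qs)"
  have "M \<in> set qs" unfolding M_def using n3 ln by (intro Max_in) auto
  then obtain p where p: "p < n" "qs ! p = M" using ln by (auto simp: in_set_conv_nth)
  have maxp: "\<And>i. i < n \<Longrightarrow> qs ! i \<le> qs ! p" using p ln unfolding M_def by (auto intro: Max_ge)
  have nb: "\<exists>a b. a < n \<and> b < n \<and> a \<noteq> b \<and> a \<noteq> p \<and> b \<noteq> p \<and> pa_adj m xs (cs ! p) (cs ! a) \<and> pa_adj m xs (cs ! p) (cs ! b)"
  proof (cases "p = 0")
    case True
    have 1: "pa_adj m xs (cs ! p) (cs ! (n - 1))" using adjl True pa_adj_sym[of m xs "cs ! (n - 1)" "cs ! 0"] by simp
    have 2: "pa_adj m xs (cs ! p) (cs ! 1)" using adj[of 0] True n3 by simp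
    show ?thesis apply (rule exI[of _ "n - 1"], rule exI[of _ 1]) using 1 2 n3 True by simp
  next
    case False
    show ?thesis
    proof (cases "p = n - 1")
      case True
      have e: "Suc (n - 2) = n - 1" using n3 by simp
      have h: "pa_adj m xs (cs ! (n - 2)) (cs ! p)" using adj[of "n - 2"] True n3 e by simp
      have 1: "pa_adj m xs (cs ! p) (cs ! (n - 2))" using h pa_adj_sym[of m xs "cs ! (n - 2)" "cs ! p"] by simp
      have 2: "pa_adj m xs (cs ! p) (cs ! 0)" using adjl True by simp
      show ?thesis apply (rule exI[of _ "n - 2"], rule exI[of _ 0]) using 1 2 n3 True by simp
    next
      case False2: False
      have e: "Suc (p - 1) = p" using False by simp
      have h: "pa_adj m xs (cs ! (p - 1)) (cs ! p)" using adj[of "p - 1"] p e by simp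
      have 1: "pa_adj m xs (cs ! p) (cs ! (p - 1))" using h pa_adj_sym[of m xs "cs ! (p - 1)" "cs ! p"] by simp
      have 2: "pa_adj m xs (cs ! p) (cs ! (p + 1))" using adj[of p] p False2 by simp
      have pn: "p + 1 < n" using p False2 by linarith
      show ?thesis apply (rule exI[of _ "p - 1"], rule exI[of _ "p + 1"]) using 1 2 p False pn by auto
    qed
  qed
  then obtain a b where ab: "a < n" "b < n" "a \<noteq> b" "a \<noteq> p" "b \<noteq> p"
    "pa_adj m xs (cs ! p) (cs ! a)" "pa_adj m xs (cs ! p) (cs ! b)" by blast
  have par: "qs ! x = (qs ! p - 1) div m" if x: "x < n" "x \<noteq> p" "pa_adj m xs (cs ! p) (cs ! x)" for x
  proof -
    have "(0 < qs ! x \<and> qs ! p = (qs ! x - 1) div m) \<or> (0 < qs ! p \<and> qs ! x = (qs ! p - 1) div m)"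
      using adjF[OF qN[OF p(1)] qN[OF x(1)]] x p csi by simp
    moreover have "\<not> (0 < qs ! x \<and> qs ! p = (qs ! x - 1) div m)"
    proof
      assume h: "0 < qs ! x \<and> qs ! p = (qs ! x - 1) div m"
      then have "qs ! p < qs ! x" using parent_less by simp
      then show False using maxp[OF x(1)] by simp
    qed
    ultimately show ?thesis by blast
  qed
  have "qs ! a = qs ! b" using par[of a] par[of b] ab by simp
  then show False using dq ab ln by (simp add: nth_eq_iff_index_eq)
qed

theorem min_conn: "min_k_connected m t xs k v"
proof -
  have "t div 4 < w \<and> w \<le> t div 2 \<and> pa_deg m xs w = m + 1" if w: "w \<in> F" "w \<noteq> v" for w
  proof -
    obtain q where q: "q < N" "w = lab q" using w by auto
    have "q \<noteq> 0"
    proof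
      assume "q = 0" then show False using q w root by simp
    qed
    then show ?thesis using rng[of q] deg_node[of q] q by simp
  qed
  then show ?thesis unfolding min_k_connected_def ball_eq
    using vlo vhi deg_root no_loop no_multi no_cycle by blast
qed

end
end

context tree begin

lemma good_target:
  assumes g: "good i (lab c)" and c: "c < N"
  shows "0 < c \<and> i = pe c"
proof -
  show ?thesis
  proof (cases "\<exists>q<I. lab q = pa_src m i")
    case True
    then obtain q where q: "q < I" "lab q = pa_src m i" by auto
    have "lab c = lab (m * q + 1 + i mod m)" using g q unfolding good_def by auto
    then have cq: "c = m * q + 1 + i mod m"
      using lab_inj[OF c child_lt[OF q(1)]] mpos by simp
    then have h: "0 < c" "pa_src m i = lab ((c - 1) div m)" "i mod m = (c - 1) mod m"
      using q mpos by simp_all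
    have "i = m * (pa_src m i - 1) + i mod m" using src_decomp by simp
    then show ?thesis using h unfolding pe_def by simp
  next
    case False
    then have "lab c \<notin> F" using g unfolding good_def by auto
    then show ?thesis using c by auto
  qed
qed

definition "Pint i \<longleftrightarrow> (\<exists>q<I. lab q = pa_src m i)"
definition "\<beta> = (real m + \<delta>) / (2 * real m * real t + 1)"
definition "xx = real N * (real m + 2) / (real m * real (t div 4))"

lemma beta_props: "0 \<le> \<beta>" "\<beta> \<le> 1"
proof -
  have a: "0 < real m + \<delta>" using dl by simp
  show "0 \<le> \<beta>" unfolding \<beta>_def using a by simp
  have t1: "t \<ge> 1" using vlo vhi by simp
  have "real m * 1 \<le> real m * (2 * real t)" using t1 by (intro mult_left_mono) auto
  then have "real m + \<delta> \<le> 2 * real m * real t + 1" using du by (simp add: algebra_simps)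
  moreover have "0 \<le> 2 * real m * real t" by simp
  then have "0 < 2 * real m * real t + 1" by linarith
  ultimately show "\<beta> \<le> 1" unfolding \<beta>_def by (simp add: pos_divide_le_eq)
qed

context
  fixes i xs
  assumes i: "i < m * t" and ok: "hist_ok m i xs" and pre: "\<forall>i'<i. xs ! i' \<in> {w. good i' w}"
begin

lemma len_i: "length xs = i" using ok unfolding hist_ok_def by simp

lemma ci_eq: "pa_c m \<delta> (length xs div m + 1) (length xs mod m + 1) = real i * (2 + \<delta> / real m) + 1 + \<delta> / real m"
  using c_eq[of i] len_i by simp

lemma step_P: assumes P: "Pint i" shows "measure (pa_next m \<delta> xs) {w. good i w} \<ge> \<beta>"
proof -
  obtain q where q: "q < I" "lab q = pa_src m i" using P unfolding Pint_def by auto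
  define c where "c = m * q + 1 + i mod m"
  have cN: "c < N" unfolding c_def using child_lt[OF q(1)] mpos by simp
  have qc: "q < c" unfolding c_def using le_mult_self[OF mpos, of q] by linarith
  have gw: "good i (lab c)"
    unfolding good_def
  proof (intro conjI allI impI)
    fix q' assume "q' < I" "lab q' = pa_src m i"
    then have "q' = q" using lab_inj[of q' q] q I_lt_N by simp
    then show "lab c = lab (m * q' + 1 + i mod m)" unfolding c_def by simp
  next
    assume "\<forall>q<I. lab q \<noteq> pa_src m i"
    then show "lab c \<notin> F" using q by auto
  qed
  define w where "w = lab c"
  have tc: "length xs div m + 1 = lab q" using q len_i unfolding pa_src_def by simp
  have wl: "w < lab q" unfolding w_def using ord[OF qc cN] .
  have w1: "1 \<le> w" unfolding w_def using lab_ge1[OF cN] .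
  have "m * w \<le> i"
  proof -
    have "w \<le> i div m" using wl tc len_i by simp
    then have "m * w \<le> m * (i div m)" by simp
    also have "\<dots> \<le> i" by simp
    finally show ?thesis .
  qed
  then have "card {i'. i' < length xs \<and> pa_src m i' = w} = m"
    using card_src_full[OF mpos w1] len_i by simp
  then have dg: "real (pa_deg m xs w) \<ge> real m" unfolding pa_deg_def by simp
  define cc where "cc = real i * (2 + \<delta> / real m) + 1 + \<delta> / real m"
  have ccp: "cc > 0" unfolding cc_def using c_pos[of i] c_eq[of i] by simp
  have cc_le: "cc \<le> 2 * real m * real t + 1"
  proof -
    have "real i * (2 + \<delta> / real m) \<le> real i * 2" using dm by (simp add: mult_left_mono)
    moreover have "real i \<le> real m * real t" using i by (metis less_imp_le of_nat_le_iff of_nat_mult)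
    ultimately show ?thesis unfolding cc_def using dm by linarith
  qed
  have wt: "pa_next_weight m \<delta> xs w = (real (pa_deg m xs w) + \<delta>) / cc"
    using wl w1 tc ci_eq unfolding pa_next_weight_def cc_def by (auto simp: Let_def)
  have "\<beta> \<le> (real m + \<delta>) / cc"
    unfolding \<beta>_def using ccp cc_le dl by (intro divide_left_mono) (auto simp: add_pos_pos)
  also have "\<dots> \<le> pa_next_weight m \<delta> xs w" unfolding wt using dg ccp by (simp add: divide_right_mono)
  also have "\<dots> = measure (pa_next m \<delta> xs) {w}" using pmf_next[OF ok] by (simp add: measure_pmf_single)
  also have "\<dots> \<le> measure (pa_next m \<delta> xs) {w. good i w}"
    using gw unfolding w_def by (intro measure_pmf.finite_measure_mono) auto
  finally show ?thesis .
qed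

lemma step_notP: assumes P: "\<not> Pint i" and t4: "t \<ge> 4"
  shows "measure (pa_next m \<delta> xs) {w. good i w} \<ge> 1 - xx"
proof -
  have A: "{w. good i w} = UNIV - F" using P unfolding good_def Pint_def by auto
  define y where "y = (real m + 2) / (real m * real (t div 4))"
  have t4': "t div 4 \<ge> 1" using t4 by simp
  have pw: "pmf (pa_next m \<delta> xs) w \<le> y" if w: "w \<in> F" for w
  proof -
    obtain c where c: "c < N" "w = lab c" using w by auto
    have wlo: "t div 4 < w" using c rng[of c] root vlo by (cases "c = 0") auto
    show ?thesis
    proof (cases "w > length xs div m + 1")
      case True
      then have "pmf (pa_next m \<delta> xs) w = 0" using pmf_next[OF ok] weight_zero by simp
      then show ?thesis unfolding y_def by simp
    next
      case False
      define tc where "tc = i div m + 1"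
      have wtc: "w \<le> tc" using False len_i unfolding tc_def by simp
      have tc2: "tc \<noteq> 1" using wtc wlo t4' by simp
      have tcge: "t div 4 \<le> i div m" using wtc wlo unfolding tc_def by simp
      define cc where "cc = real i * (2 + \<delta> / real m) + 1 + \<delta> / real m"
      have ccge: "cc \<ge> real m * real (t div 4)"
      proof -
        have "real i * 1 \<le> real i * (2 + \<delta> / real m)" by (rule mult_left_mono) (use dm in auto)
        then have "real i * (2 + \<delta> / real m) \<ge> real i" by simp
        moreover have "real m * real (t div 4) \<le> real i"
        proof -
          have "m * (t div 4) \<le> m * (i div m)" using tcge by simp
          also have "\<dots> \<le> i" by simp
          finally show ?thesis by (metis of_nat_le_iff of_nat_mult)
        qed
        ultimately show ?thesis unfolding cc_def using dm by linarith
      qed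
      have mpos': "real m * real (t div 4) > 0" using mpos t4' by simp
      have tg: "card {i'. i' < length xs \<and> xs ! i' = w} \<le> 1"
      proof -
        have "{i'. i' < length xs \<and> xs ! i' = w} \<subseteq> {pe c}"
          using pre len_i good_target[of _ c] c by auto
        then have "card {i'. i' < length xs \<and> xs ! i' = w} \<le> card {pe c}" by (intro card_mono) auto
        then show ?thesis by simp
      qed
      have "card {i'. i' < length xs \<and> pa_src m i' = w} \<le> m" using card_src_le[OF mpos] .
      then have dg: "real (pa_deg m xs w) \<le> real m + 1" using tg unfolding pa_deg_def by simp
      have wt: "pa_next_weight m \<delta> xs w \<le> (real m + 2) / cc"
      proof (cases "w = tc")
        case True
        have "pa_next_weight m \<delta> xs w = (real (pa_deg m xs w) + 1 + real (i mod m + 1) * \<delta> / real m) / cc"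
          using True tc2 ci_eq len_i unfolding pa_next_weight_def cc_def tc_def by (auto simp: Let_def)
        moreover have "real (i mod m + 1) * \<delta> / real m \<le> 0"
        proof -
          have "real (i mod m + 1) * \<delta> \<le> 0" using du by (intro mult_nonneg_nonpos) auto
          then show ?thesis by (intro divide_nonpos_nonneg) auto
        qed
        moreover have "cc > 0" using ccge mpos' by linarith
        ultimately show ?thesis using dg by (simp add: divide_right_mono)
      next
        case False
        have w1: "1 \<le> w" using c lab_ge1 by simp
        have "pa_next_weight m \<delta> xs w = (real (pa_deg m xs w) + \<delta>) / cc"
          using False wtc w1 tc2 ci_eq len_i unfolding pa_next_weight_def cc_def tc_def by (auto simp: Let_def)
        moreover have "cc > 0" using ccge mpos' by linarith
        ultimately show ?thesis using dg du by (simp add: divide_right_mono)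
      qed
      also have "\<dots> \<le> y" unfolding y_def using ccge mpos' by (intro divide_left_mono) auto
      finally show ?thesis using pmf_next[OF ok] by simp
    qed
  qed
  have "measure (pa_next m \<delta> xs) F = (\<Sum>w\<in>F. pmf (pa_next m \<delta> xs) w)"
    by (rule measure_measure_pmf_finite) simp
  also have "\<dots> \<le> (\<Sum>w\<in>F. y)" using pw by (rule sum_mono)
  also have "\<dots> = real (card F) * y" by simp
  also have "\<dots> \<le> real N * y"
  proof -
    have "card F \<le> N" using card_image_le[of "{0..<N}" lab] by simp
    then have "real (card F) \<le> real N" by (simp only: of_nat_le_iff)
    moreover have "y \<ge> 0" unfolding y_def by simp
    ultimately show ?thesis by (rule mult_right_mono)
  qed
  also have "\<dots> = xx" unfolding xx_def y_def by simp
  finally have "measure (pa_next m \<delta> xs) F \<le> xx" .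
  moreover have "measure (pa_next m \<delta> xs) (UNIV - F) = 1 - measure (pa_next m \<delta> xs) F"
    using measure_pmf.prob_compl[of F "pa_next m \<delta> xs"] by simp
  ultimately show ?thesis unfolding A by simp
qed

end

lemma prob_Ev: assumes t4: "t \<ge> 4" and x1: "xx \<le> 1"
  shows "measure (PA m \<delta> t) Ev \<ge> \<beta> ^ (m * I) * (1 - xx) ^ (m * t)"
proof -
  define b where "b i = (if Pint i then \<beta> else 1 - xx)" for i
  have b0: "b i \<ge> 0" for i unfolding b_def using beta_props x1 by simp
  have "(\<Prod>i<m * t. b i) \<le> measure (pa_hist m \<delta> (m * t)) {xs. \<forall>i<m * t. xs ! i \<in> {w. good i w}}"
  proof (rule prob_prod[OF b0])
    fix i xs assume "i < m * t" "xs \<in> set_pmf (pa_hist m \<delta> i)" "\<forall>i'<i. xs ! i' \<in> {w. good i' w}"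
    note h = this
    have ok: "hist_ok m i xs" using hist_support h(2) .
    show "b i \<le> measure (pa_next m \<delta> xs) {w. good i w}"
    proof (cases "Pint i")
      case True
      then show ?thesis using step_P[OF h(1) ok h(3) True] unfolding b_def by simp
    next
      case False
      then show ?thesis using step_notP[OF h(1) ok h(3) False t4] unfolding b_def by simp
    qed
  qed
  then have lb: "(\<Prod>i<m * t. b i) \<le> measure (PA m \<delta> t) Ev" unfolding PA_def Ev_def .
  have "(\<Prod>i<m * t. b i) = \<beta> ^ card ({..<m * t} \<inter> {i. Pint i}) * (1 - xx) ^ card ({..<m * t} \<inter> - {i. Pint i})"
    unfolding b_def by (simp add: prod.If_cases)
  moreover have cP: "card ({..<m * t} \<inter> {i. Pint i}) \<le> m * I"
  proof -
    have "card ({..<m * t} \<inter> {i. Pint i}) \<le> card (lab ` {0..<I} \<times> {..<m})"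
    proof (rule card_inj_on_le[where f = "\<lambda>i. (pa_src m i, i mod m)"])
      show "inj_on (\<lambda>i. (pa_src m i, i mod m)) ({..<m * t} \<inter> {i. Pint i})"
        by (rule inj_onI) (metis prod.inject src_decomp)
      show "(\<lambda>i. (pa_src m i, i mod m)) ` ({..<m * t} \<inter> {i. Pint i}) \<subseteq> lab ` {0..<I} \<times> {..<m}"
        unfolding Pint_def using mpos by (force intro: image_eqI)
    qed simp
    also have "\<dots> \<le> I * m" using card_image_le[of "{0..<I}" lab] by (simp add: card_cartesian_product)
    finally show ?thesis by (simp add: mult.commute)
  qed
  moreover have cnP: "card ({..<m * t} \<inter> - {i. Pint i}) \<le> m * t"
    using card_mono[of "{..<m * t}" "{..<m * t} \<inter> - {i. Pint i}"] by simp
  moreover have x01: "(1 - xx) \<le> 1" "0 \<le> 1 - xx"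
  proof -
    have "xx \<ge> 0" unfolding xx_def by simp
    then show "(1 - xx) \<le> 1" by simp
    show "0 \<le> 1 - xx" using x1 by simp
  qed
  moreover have "\<beta> ^ (m * I) \<le> \<beta> ^ card ({..<m * t} \<inter> {i. Pint i})"
    by (rule power_decreasing[OF cP beta_props])
  moreover have "(1 - xx) ^ (m * t) \<le> (1 - xx) ^ card ({..<m * t} \<inter> - {i. Pint i})"
    by (rule power_decreasing[OF cnP x01(2) x01(1)])
  ultimately have "\<beta> ^ (m * I) * (1 - xx) ^ (m * t) \<le> (\<Prod>i<m * t. b i)"
    using beta_props x01 by (simp add: mult_mono)
  then show ?thesis using lb by linarith
qed

end

context pa begin

definition "Lw t k = (t div 2 - t div 4) div Snum m (Suc k)"
definition "Jq t k q = {t div 2 - q * Lw t k <.. t div 2 - (q - 1) * Lw t k}"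
definition "Labs t k v = PiE {0..<Snum m (Suc k)} (\<lambda>q. if q = 0 then {v} else Jq t k q)"

lemma LN: "Lw t k * Snum m (Suc k) \<le> t div 2 - t div 4"
  unfolding Lw_def by (rule div_times_less_eq_dividend)

lemma labs_tree: assumes lab: "lab \<in> Labs t k v" and v: "t div 2 < v" "v \<le> t"
  shows "tree m \<delta> t k v lab"
proof -
  define N where "N = Snum m (Suc k)"
  define L where "L = Lw t k"
  have LN': "L * N \<le> t div 2 - t div 4" unfolding L_def N_def using LN .
  have lq: "t div 2 - q * L < lab q \<and> lab q \<le> t div 2 - (q - 1) * L" if q: "0 < q" "q < N" for q
  proof -
    have "\<forall>i\<in>{0..<N}. lab i \<in> (if i = 0 then {v} else Jq t k i)"
      using lab unfolding Labs_def N_def PiE_iff by blast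
    then have "lab q \<in> (if q = 0 then {v} else Jq t k q)" using q by (meson atLeastLessThan_iff zero_le)
    then have "lab q \<in> Jq t k q" using q by simp
    then show ?thesis unfolding Jq_def L_def by simp
  qed
  have l0: "lab 0 = v"
  proof -
    have "\<forall>i\<in>{0..<N}. lab i \<in> (if i = 0 then {v} else Jq t k i)"
      using lab unfolding Labs_def N_def PiE_iff by blast
    moreover have "0 \<in> {0..<N}" unfolding N_def by simp
    ultimately have "lab 0 \<in> (if (0::nat) = 0 then {v} else Jq t k 0)" by blast
    then show ?thesis by simp
  qed
  have qL: "q * L \<le> t div 2 - t div 4" if "q < N" for q
  proof -
    have "q * L \<le> N * L" by (rule mult_le_mono1) (use that in simp)
    then show ?thesis using LN' by (simp only: mult.commute)
  qed
  show ?thesis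
  proof (unfold_locales)
    show "lab 0 = v" by (rule l0)
    show "t div 2 < v" "v \<le> t" using v by auto
  next
    fix q assume q: "0 < q" "q < Snum m (Suc k)"
    then have "t div 2 - q * L \<ge> t div 4" using qL[of q] unfolding N_def by simp
    then show "t div 4 < lab q \<and> lab q \<le> t div 2" using lq[of q] q unfolding N_def by auto
  next
    fix q q' assume qq: "q < q'" "q' < Snum m (Suc k)"
    show "lab q' < lab q"
    proof (cases "q = 0")
      case True
      then show ?thesis using lq[of q'] qq l0 v unfolding N_def by auto
    next
      case False
      have "q * L \<le> (q' - 1) * L" by (rule mult_le_mono1) (use qq in simp)
      then have "t div 2 - (q' - 1) * L \<le> t div 2 - q * L" by (rule diff_le_mono2)
      then show ?thesis using lq[of q'] lq[of q] qq False unfolding N_def by fastforce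
    qed
  qed
qed

lemma card_Labs: "card (Labs t k v) = Lw t k ^ (m * Snum m k)"
proof -
  have "card (Labs t k v) = (\<Prod>q\<in>{0..<Snum m (Suc k)}. card (if q = 0 then {v} else Jq t k q))"
    unfolding Labs_def by (rule card_PiE) simp
  also have "\<dots> = (\<Prod>q\<in>{0..<Snum m (Suc k)}. if q = 0 then 1 else Lw t k)"
  proof (rule prod.cong)
    fix q assume q: "q \<in> {0..<Snum m (Suc k)}"
    have "q * Lw t k \<le> t div 2"
    proof -
      have "q * Lw t k \<le> Snum m (Suc k) * Lw t k" by (rule mult_le_mono1) (use q in simp)
      also have "\<dots> \<le> t div 2 - t div 4" using LN by (simp add: mult.commute)
      finally show ?thesis by simp
    qed
    moreover have "(q - 1) * Lw t k \<le> q * Lw t k" by simp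
    ultimately show "card (if q = 0 then {v} else Jq t k q) = (if q = 0 then 1 else Lw t k)"
      unfolding Jq_def by (auto simp: diff_mult_distrib)
  qed simp
  also have "\<dots> = (\<Prod>q\<in>{1..<Snum m (Suc k)}. Lw t k)"
    by (subst prod.atLeast_Suc_lessThan) auto
  also have "\<dots> = Lw t k ^ (m * Snum m k)" by simp
  finally show ?thesis .
qed

lemma Ev_disjoint: assumes l1: "lab1 \<in> Labs t k v" and l2: "lab2 \<in> Labs t k v" and v: "t div 2 < v" "v \<le> t"
  and x1: "xs \<in> tree.Ev m t k lab1" and x2: "xs \<in> tree.Ev m t k lab2"
  shows "lab1 = lab2"
proof -
  interpret T1: tree m \<delta> t k v lab1 using labs_tree[OF l1 v] .
  interpret T2: tree m \<delta> t k v lab2 using labs_tree[OF l2 v] .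
  have eq: "lab1 q = lab2 q" if "q < Snum m (Suc k)" for q
    using that
  proof (induction q rule: less_induct)
    case (less q)
    show ?case
    proof (cases "q = 0")
      case True then show ?thesis using T1.root T2.root by simp
    next
      case False
      have p: "(q - 1) div m < q" using T1.parent_less False by simp
      have "lab1 ((q - 1) div m) = lab2 ((q - 1) div m)" using less.IH[OF p] p less.prems by simp
      then have "T1.pe q = T2.pe q" unfolding T1.pe_def T2.pe_def by simp
      moreover have "xs ! T1.pe q = lab1 q" using T1.pe_target[OF x1, of q] False less.prems by simp
      moreover have "xs ! T2.pe q = lab2 q" using T2.pe_target[OF x2, of q] False less.prems by simp
      ultimately show ?thesis by simp
    qed
  qed
  show ?thesis
    using l1 l2 eq unfolding Labs_def by (intro PiE_ext) auto
qed

end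

context pa begin

lemma Ev_min: assumes lab: "lab \<in> Labs t k v" and v: "t div 2 < v" "v \<le> t"
  and xs: "xs \<in> tree.Ev m t k lab" "xs \<in> set_pmf (PA m \<delta> t)"
  shows "min_k_connected m t xs k v"
proof -
  interpret T: tree m \<delta> t k v lab using labs_tree[OF lab v] .
  have "length xs = m * t" using hist_support xs(2) unfolding PA_def hist_ok_def by auto
  then show ?thesis using T.min_conn xs(1) by blast
qed

lemma prob_v: assumes v: "t div 2 < v" "v \<le> t" and t4: "t \<ge> 4"
  and x1: "real (Snum m (Suc k)) * (real m + 2) / (real m * real (t div 4)) \<le> 1"
  shows "measure (PA m \<delta> t) {xs. min_k_connected m t xs k v} \<ge>
     real (Lw t k ^ (m * Snum m k)) *
     (((real m + \<delta>) / (2 * real m * real t + 1)) ^ (m * Snum m k) *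
      (1 - real (Snum m (Suc k)) * (real m + 2) / (real m * real (t div 4))) ^ (m * t))"
proof -
  define c where "c = ((real m + \<delta>) / (2 * real m * real t + 1)) ^ (m * Snum m k) *
      (1 - real (Snum m (Suc k)) * (real m + 2) / (real m * real (t div 4))) ^ (m * t)"
  define U where "U = (\<Union>lab\<in>Labs t k v. tree.Ev m t k lab)"
  have fin: "finite (Labs t k v)" unfolding Labs_def Jq_def by (intro finite_PiE) auto
  have each: "measure (PA m \<delta> t) (tree.Ev m t k lab) \<ge> c" if lab: "lab \<in> Labs t k v" for lab
  proof -
    interpret T: tree m \<delta> t k v lab using labs_tree[OF lab v] .
    show ?thesis using T.prob_Ev[OF t4] x1 unfolding c_def T.\<beta>_def T.xx_def by simp
  qed
  have disj: "disjoint_family_on (\<lambda>lab. tree.Ev m t k lab) (Labs t k v)"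
    unfolding disjoint_family_on_def using Ev_disjoint[OF _ _ v] by blast
  have "measure (PA m \<delta> t) U = (\<Sum>lab\<in>Labs t k v. measure (PA m \<delta> t) (tree.Ev m t k lab))"
    unfolding U_def by (rule measure_pmf.finite_measure_finite_Union[OF fin _ disj]) auto
  also have "\<dots> \<ge> (\<Sum>lab\<in>Labs t k v. c)" using each by (intro sum_mono) auto
  ultimately have "measure (PA m \<delta> t) U \<ge> real (card (Labs t k v)) * c" by simp
  moreover have "measure (PA m \<delta> t) U \<le> measure (PA m \<delta> t) {xs. min_k_connected m t xs k v}"
  proof -
    have "measure (PA m \<delta> t) U = measure (PA m \<delta> t) (U \<inter> set_pmf (PA m \<delta> t))"
      by (simp add: measure_Int_set_pmf)
    also have "\<dots> \<le> measure (PA m \<delta> t) {xs. min_k_connected m t xs k v}"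
      using Ev_min[OF _ v] unfolding U_def by (intro measure_pmf.finite_measure_mono) auto
    finally show ?thesis .
  qed
  ultimately show ?thesis unfolding c_def card_Labs by simp
qed

lemma expect_lb: assumes t4: "t \<ge> 4"
  and x1: "real (Snum m (Suc k)) * (real m + 2) / (real m * real (t div 4)) \<le> 1"
  shows "measure_pmf.expectation (PA m \<delta> t) (\<lambda>xs. real (M_count m t xs k)) \<ge>
     real (t - t div 2) * (real (Lw t k ^ (m * Snum m k)) *
     (((real m + \<delta>) / (2 * real m * real t + 1)) ^ (m * Snum m k) *
      (1 - real (Snum m (Suc k)) * (real m + 2) / (real m * real (t div 4))) ^ (m * t)))"
    (is "_ \<ge> _ * ?c")
proof -
  define V where "V = {t div 2<..t}"
  have mc: "real (M_count m t xs k) = (\<Sum>v\<in>V. indicator {xs. min_k_connected m t xs k v} xs)" for xs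
  proof -
    have "{v. min_k_connected m t xs k v} = V \<inter> {v. min_k_connected m t xs k v}"
      unfolding V_def min_k_connected_def by auto
    then have "real (M_count m t xs k) = real (card (V \<inter> {v. min_k_connected m t xs k v}))"
      unfolding M_count_def by simp
    also have "\<dots> = (\<Sum>v\<in>V \<inter> {v. min_k_connected m t xs k v}. (1::real))" by simp
    also have "\<dots> = (\<Sum>v\<in>V. if v \<in> {v. min_k_connected m t xs k v} then 1 else 0)"
      by (rule sum.inter_restrict) (simp add: V_def)
    also have "\<dots> = (\<Sum>v\<in>V. indicator {v. min_k_connected m t xs k v} v)"
      by (rule sum.cong) (simp_all add: indicator_def)
    finally show ?thesis by (simp add: indicator_def)
  qed
  have int: "integrable (measure_pmf (PA m \<delta> t)) (indicator A :: _ \<Rightarrow> real)" for A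
    by (rule measure_pmf.integrable_const_bound[where B=1]) auto
  have "measure_pmf.expectation (PA m \<delta> t) (\<lambda>xs. real (M_count m t xs k)) =
      (\<Sum>v\<in>V. measure_pmf.expectation (PA m \<delta> t) (indicator {xs. min_k_connected m t xs k v}))"
    unfolding mc using Bochner_Integration.integral_sum[where I=V and M="measure_pmf (PA m \<delta> t)" and f="\<lambda>v. indicator {xs. min_k_connected m t xs k v}"] int
    by simp
  also have "\<dots> = (\<Sum>v\<in>V. measure (PA m \<delta> t) {xs. min_k_connected m t xs k v})"
    by simp
  also have "\<dots> \<ge> (\<Sum>v\<in>V. ?c)"
    using prob_v[OF _ _ t4 x1] unfolding V_def by (intro sum_mono) auto
  moreover have "(\<Sum>v\<in>V. ?c) = real (t - t div 2) * ?c"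
    unfolding V_def by (simp only: sum_constant card_greaterThanAtMost)
  ultimately show ?thesis by (simp only:)
qed

end

context pa begin

lemma Snum_pow: "Snum m d + 1 \<le> m ^ d"
proof (induction d)
  case 0 then show ?case by simp
next
  case (Suc d)
  have "m * (Snum m d + 1) \<le> m * m ^ d" using Suc.IH by (rule mult_le_mono2)
  moreover have "m * Snum m d + 2 \<le> m * (Snum m d + 1)" using m2 by (simp add: algebra_simps)
  ultimately show ?case by simp
qed

lemma k_bound:
  fixes t \<epsilon> :: real
  assumes e: "\<epsilon> > 0" and ll: "ln (ln t) \<ge> 0"
  shows "real (nat (round ((1 - \<epsilon>) * ln (ln t) / ln (real m)))) \<le> max (1 - \<epsilon>) (1/2) * ln (ln t) / ln (real m) + 1"
proof -
  define r where "r = (1 - \<epsilon>) * ln (ln t) / ln (real m)"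
  define \<eta> where "\<eta> = max (1 - \<epsilon>) (1/2)"
  have lm: "ln (real m) > 0" using m2 by simp
  have "(1 - \<epsilon>) * ln (ln t) \<le> \<eta> * ln (ln t)" unfolding \<eta>_def using ll by (intro mult_right_mono) auto
  then have r: "r \<le> \<eta> * ln (ln t) / ln (real m)" unfolding r_def using lm by (simp add: divide_right_mono)
  have pos: "0 \<le> \<eta> * ln (ln t) / ln (real m)" unfolding \<eta>_def using ll lm by simp
  have "real (nat (round r)) = max 0 (real_of_int (round r))" by (simp add: real_nat)
  also have "\<dots> \<le> max 0 (r + 1/2)" using of_int_round_le[of r] by simp
  also have "\<dots> \<le> \<eta> * ln (ln t) / ln (real m) + 1" using r pos by simp
  finally show ?thesis unfolding r_def \<eta>_def .
qed

lemma N_bound: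
  fixes t \<eta> :: real
  assumes lt: "ln t > 0" and kb: "real k \<le> \<eta> * ln (ln t) / ln (real m) + 1"
  shows "real (Snum m (Suc k)) \<le> real m ^ 2 * ln t powr \<eta>"
proof -
  have m1: "real m > 1" using m2 by simp
  have lm: "ln (real m) > 0" using m2 by simp
  have "Snum m (Suc k) \<le> m ^ Suc k" using Snum_pow[of "Suc k"] by linarith
  then have "real (Snum m (Suc k)) \<le> real (m ^ Suc k)" by (simp only: of_nat_le_iff)
  also have "\<dots> = real m powr real (Suc k)"
    using powr_realpow[of "real m" "Suc k"] m1 by (simp only: of_nat_power)
  also have "\<dots> \<le> real m powr (\<eta> * ln (ln t) / ln (real m) + 2)"
    using kb m1 by (intro powr_mono) auto
  also have "\<dots> = real m powr (\<eta> * ln (ln t) / ln (real m)) * real m powr 2" by (simp add: powr_add)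
  also have "real m powr (\<eta> * ln (ln t) / ln (real m)) = ln t powr \<eta>"
    using m1 lm lt unfolding powr_def by simp
  also have "real m powr 2 = real m ^ 2" using m1 by (simp add: powr_realpow[of _ 2, simplified])
  finally show ?thesis by (simp add: mult.commute)
qed

end

context pa begin

lemma LB_core:
  fixes t k :: nat
  assumes t16: "t \<ge> 16" and tN: "32 * real (Snum m (Suc k)) \<le> real t"
  shows "real t / 2 * exp (-(real (Snum m (Suc k)) * (ln (real (Snum m (Suc k)) / ((real m + \<delta>) / (24 * real m))) + 32 * real m)))
     \<le> real (t - t div 2) * (real (Lw t k ^ (m * Snum m k)) *
     (((real m + \<delta>) / (2 * real m * real t + 1)) ^ (m * Snum m k) *
      (1 - real (Snum m (Suc k)) * (real m + 2) / (real m * real (t div 4))) ^ (m * t)))"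
proof -
  define N where "N = Snum m (Suc k)"
  define \<gamma> where "\<gamma> = (real m + \<delta>) / (24 * real m)"
  define e where "e = m * Snum m k"
  define Lr where "Lr = real (Lw t k)"
  define \<beta> where "\<beta> = (real m + \<delta>) / (2 * real m * real t + 1)"
  define xx where "xx = real N * (real m + 2) / (real m * real (t div 4))"
  have mp: "real m \<ge> 2" using m2 by simp
  have md: "real m + \<delta> > 0" using dl by simp
  have N1: "N \<ge> 1" unfolding N_def by simp
  have N1r: "real N \<ge> 1" using N1 by simp
  have eN: "e \<le> N" unfolding e_def N_def by simp
  have tN': "32 * real N \<le> real t" using tN unfolding N_def .
  have tpos: "real t \<ge> 16" using t16 by simp
  have a: "real (t div 2 - t div 4) \<ge> real t / 4 - 1 / 2"
  proof -
    have h1: "t \<le> 2 * (t div 2) + 1" by linarith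
    have h2: "4 * (t div 4) \<le> t" by linarith
    have h3: "t div 4 \<le> t div 2" by (simp add: div_le_mono2)
    have "real (t div 2 - t div 4) = real (t div 2) - real (t div 4)" using h3 by simp
    moreover have "real t \<le> 2 * real (t div 2) + 1"
    proof -
      have "real t \<le> real (2 * (t div 2) + 1)" using h1 by (simp only: of_nat_le_iff)
      then show ?thesis by simp
    qed
    moreover have "4 * real (t div 4) \<le> real t"
    proof -
      have "real (4 * (t div 4)) \<le> real t" using h2 by (simp only: of_nat_le_iff)
      then show ?thesis by simp
    qed
    ultimately show ?thesis by linarith
  qed
  have Lr1: "Lr \<ge> real (t div 2 - t div 4) / real N - 1"
  proof -
    define A where "A = t div 2 - t div 4"
    have am: "A mod N < N" using N1 by simp
    have ad: "N * (A div N) + A mod N = A" by simp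
    have "A < N * (A div N) + N" using am ad by linarith
    then have "real A < real (N * (A div N) + N)" by (simp only: of_nat_less_iff)
    moreover have "real (N * (A div N) + N) = real N * (real (A div N) + 1)" by (simp add: algebra_simps)
    moreover have LrA: "Lr = real (A div N)" unfolding Lr_def Lw_def A_def N_def by simp
    ultimately have "real A < real N * (Lr + 1)" by simp
    then have "real A / real N < Lr + 1" using N1r by (simp add: divide_less_eq mult.commute)
    then show ?thesis unfolding A_def by simp
  qed
  have Lr2: "Lr \<ge> real t / (8 * real N)"
  proof -
    have "real t / (8 * real N) \<le> (real t / 4 - 1 / 2) / real N - 1"
      using N1r tN' by (simp add: field_simps)
    also have "\<dots> \<le> real (t div 2 - t div 4) / real N - 1" using a N1r by (simp add: divide_right_mono)
    finally show ?thesis using Lr1 by linarith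
  qed
  have b1: "\<beta> \<ge> (real m + \<delta>) / (3 * real m * real t)"
  proof -
    have "1 * 1 \<le> real m * real t" using mp tpos by (intro mult_mono) auto
    then have "2 * real m * real t + 1 \<le> 3 * real m * real t" by simp
    moreover have "0 < 2 * real m * real t + 1" using mp tpos by (simp add: add_pos_pos)
    ultimately show ?thesis unfolding \<beta>_def using md by (intro divide_left_mono) auto
  qed
  have Lb: "Lr * \<beta> \<ge> \<gamma> / real N"
  proof -
    have "\<gamma> / real N = (real t / (8 * real N)) * ((real m + \<delta>) / (3 * real m * real t))"
      unfolding \<gamma>_def using mp tpos N1r by (simp add: field_simps)
    also have "\<dots> \<le> Lr * \<beta>" using Lr2 b1 md mp tpos by (intro mult_mono) (auto simp: Lr_def)
    finally show ?thesis .
  qed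
  have g0: "\<gamma> > 0" unfolding \<gamma>_def using md mp by simp
  have g1: "\<gamma> \<le> 1" unfolding \<gamma>_def using mp du by (simp add: field_simps)
  have gN: "\<gamma> / real N \<le> 1" using g1 N1r by (simp add: field_simps)
  have gN0: "\<gamma> / real N \<ge> 0" using g0 N1r by simp
  have P1: "Lr ^ e * \<beta> ^ e \<ge> exp (- (real N * ln (real N / \<gamma>)))"
  proof -
    have "exp (- (real N * ln (real N / \<gamma>))) = (\<gamma> / real N) ^ N"
    proof -
      have "ln (real N / \<gamma>) = - ln (\<gamma> / real N)" using g0 N1r by (simp add: ln_div)
      then have "- (real N * ln (real N / \<gamma>)) = real N * ln (\<gamma> / real N)" by simp
      then show ?thesis using g0 N1r by (simp add: exp_of_nat_mult)
    qed
    also have "\<dots> \<le> (\<gamma> / real N) ^ e" by (rule power_decreasing[OF eN gN0 gN])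
    also have "\<dots> \<le> (Lr * \<beta>) ^ e" using Lb gN0 by (intro power_mono) auto
    also have "\<dots> = Lr ^ e * \<beta> ^ e" by (simp add: power_mult_distrib)
    finally show ?thesis .
  qed
  have x16: "xx \<le> 16 * real N / real t"
  proof -
    have h: "t \<le> 4 * (t div 4) + 3" by linarith
    then have "real t \<le> real (4 * (t div 4) + 3)" by (simp only: of_nat_le_iff)
    then have "real t \<le> 4 * real (t div 4) + 3" by simp
    then have d4: "real (t div 4) \<ge> real t / 8" using tpos by linarith
    have "xx \<le> real N * (2 * real m) / (real m * (real t / 8))"
      unfolding xx_def using d4 mp tpos N1r
      by (intro frac_le mult_left_mono mult_mono) auto
    also have "\<dots> = 16 * real N / real t" using mp tpos by (simp add: field_simps)
    finally show ?thesis .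
  qed
  have x0: "xx \<ge> 0" unfolding xx_def by simp
  have xh: "xx \<le> 1/2"
  proof -
    have "16 * real N / real t \<le> 1/2" using tN' tpos by (simp add: field_simps)
    then show ?thesis using x16 by linarith
  qed
  have P2: "(1 - xx) ^ (m * t) \<ge> exp (- (32 * real m * real N))"
  proof -
    have "ln (1 - xx) \<ge> - xx - 2 * xx\<^sup>2" using ln_one_minus_pos_lower_bound[OF x0 xh] .
    moreover have "2 * xx\<^sup>2 \<le> xx"
    proof -
      have "xx * xx \<le> (1/2) * xx" using x0 xh by (intro mult_right_mono) auto
      then show ?thesis by (simp add: power2_eq_square)
    qed
    ultimately have l: "ln (1 - xx) \<ge> - 2 * xx" by linarith
    have "real (m * t) * ln (1 - xx) \<ge> real (m * t) * (- 2 * xx)" using l by (intro mult_left_mono) auto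
    moreover have "real (m * t) * (- 2 * xx) \<ge> - (32 * real m * real N)"
    proof -
      have "real (m * t) * (2 * xx) \<le> real (m * t) * (2 * (16 * real N / real t))"
        using x16 x0 by (intro mult_left_mono) auto
      also have "\<dots> = real m * real t * (2 * (16 * real N / real t))" by simp
      also have "\<dots> = 32 * real m * real N" using tpos by (simp add: field_simps)
      finally show ?thesis by simp
    qed
    ultimately have "- (32 * real m * real N) \<le> real (m * t) * ln (1 - xx)" by linarith
    then have "exp (- (32 * real m * real N)) \<le> exp (real (m * t) * ln (1 - xx))" by simp
    also have "\<dots> = exp (ln (1 - xx)) ^ (m * t)" by (rule exp_of_nat_mult)
    also have "exp (ln (1 - xx)) = 1 - xx" using xh by simp
    finally show ?thesis .
  qed
  have P3: "real (t - t div 2) \<ge> real t / 2"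
  proof -
    have "2 * (t div 2) \<le> t" by linarith
    then have "real (2 * (t div 2)) \<le> real t" by (simp only: of_nat_le_iff)
    then have "2 * real (t div 2) \<le> real t" by simp
    then show ?thesis by (simp add: of_nat_diff)
  qed
  have "real t / 2 * exp (-(real N * (ln (real N / \<gamma>) + 32 * real m)))
      = real t / 2 * (exp (- (real N * ln (real N / \<gamma>))) * exp (- (32 * real m * real N)))"
    by (simp add: exp_add[symmetric] algebra_simps)
  also have "\<dots> \<le> real (t - t div 2) * ((Lr ^ e * \<beta> ^ e) * (1 - xx) ^ (m * t))"
  proof -
    have nn: "0 \<le> Lr ^ e * \<beta> ^ e" using P1 exp_ge_zero order_trans by blast
    show ?thesis using P1 P2 P3 tpos nn by (intro mult_mono) auto
  qed
  also have "\<dots> = real (t - t div 2) * (real (Lw t k ^ e) * (\<beta> ^ e * (1 - xx) ^ (m * t)))"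
    unfolding Lr_def by (simp add: algebra_simps)
  finally show ?thesis unfolding N_def \<gamma>_def e_def \<beta>_def xx_def .
qed

end

context pa begin

lemma xx_small:
  fixes t k :: nat
  assumes t16: "t \<ge> 16" and tN: "32 * real (Snum m (Suc k)) \<le> real t"
  shows "real (Snum m (Suc k)) * (real m + 2) / (real m * real (t div 4)) \<le> 1"
proof -
  define N where "N = Snum m (Suc k)"
  have mp: "real m \<ge> 2" using m2 by simp
  have tpos: "real t \<ge> 16" using t16 by simp
  have N1r: "real N \<ge> 1" unfolding N_def by simp
  have h: "t \<le> 4 * (t div 4) + 3" by linarith
  then have "real t \<le> real (4 * (t div 4) + 3)" by (simp only: of_nat_le_iff)
  then have "real t \<le> 4 * real (t div 4) + 3" by simp
  then have d4: "real (t div 4) \<ge> real t / 8" using tpos by linarith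
  have "real N * (real m + 2) / (real m * real (t div 4)) \<le> real N * (2 * real m) / (real m * (real t / 8))"
    using d4 mp tpos N1r by (intro frac_le mult_left_mono mult_mono) auto
  also have "\<dots> = 16 * real N / real t" using mp tpos by (simp add: field_simps)
  also have "\<dots> \<le> 1" using tN tpos unfolding N_def by (simp add: field_simps)
  finally show ?thesis unfolding N_def .
qed

theorem main:
  fixes \<epsilon> :: real
  assumes e: "\<epsilon> > 0"
  shows "filterlim
           (\<lambda>t::nat. measure_pmf.expectation (PA m \<delta> t)
              (\<lambda>xs. real (M_count m t xs
                 (nat (round ((1 - \<epsilon>) * ln (ln (real t)) / ln (real m)))))))
           at_top sequentially"
proof -
  define \<eta> where "\<eta> = max (1 - \<epsilon>) (1/2)"
  define K where "K = real m ^ 2"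
  define \<gamma> where "\<gamma> = (real m + \<delta>) / (24 * real m)"
  define C where "C = 32 * real m"
  define g where "g x = x / 2 * exp (-(K * ln x powr \<eta>) * (ln (K * ln x powr \<eta> / \<gamma>) + C))" for x :: real
  have \<eta>: "0 < \<eta>" "\<eta> < 1" unfolding \<eta>_def using e by auto
  have Kp: "K > 0" unfolding K_def using m2 by simp
  have mp: "real m \<ge> 2" using m2 by simp
  have gp: "\<gamma> > 0" unfolding \<gamma>_def using dl mp by simp
  have g1: "\<gamma> < 1" unfolding \<gamma>_def using du mp by (simp add: field_simps)
  have Cp: "C \<ge> 0" unfolding C_def by simp
  have F1: "filterlim g at_top at_top" unfolding g_def using \<eta> Kp gp by real_asymp
  have F2: "eventually (\<lambda>x. 32 * (K * ln x powr \<eta>) \<le> x) at_top" using \<eta> Kp by real_asymp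
  have F3: "eventually (\<lambda>x::real. x \<ge> 16) at_top" by real_asymp
  have G1: "filterlim (\<lambda>n. g (real n)) at_top sequentially"
    by (rule filterlim_compose[OF F1 filterlim_real_sequentially])
  have ev: "eventually (\<lambda>n. 32 * (K * ln (real n) powr \<eta>) \<le> real n \<and> real n \<ge> 16) sequentially"
    using eventually_compose_filterlim[OF eventually_conj[OF F2 F3] filterlim_real_sequentially] .
  show ?thesis
  proof (rule filterlim_at_top_mono[OF G1])
    show "\<forall>\<^sub>F n in sequentially. g (real n) \<le> measure_pmf.expectation (PA m \<delta> n)
              (\<lambda>xs. real (M_count m n xs (nat (round ((1 - \<epsilon>) * ln (ln (real n)) / ln (real m))))))"
      using ev
    proof (rule eventually_mono)
      fix t :: nat
      assume h: "32 * (K * ln (real t) powr \<eta>) \<le> real t \<and> real t \<ge> 16"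
      define k where "k = nat (round ((1 - \<epsilon>) * ln (ln (real t)) / ln (real m)))"
      define N where "N = Snum m (Suc k)"
      define \<Phi> where "\<Phi> = K * ln (real t) powr \<eta>"
      have t16: "t \<ge> 16" using h by simp
      have lt: "ln (real t) > 1"
      proof -
        have "exp 1 \<le> (3::real)" using exp_le by simp
        then have "exp 1 < real t" using h by linarith
        then have "ln (exp 1) < ln (real t)" using h by (subst ln_less_cancel_iff) auto
        then show ?thesis by simp
      qed
      have llt: "ln (ln (real t)) \<ge> 0" using lt by simp
      have kb: "real k \<le> \<eta> * ln (ln (real t)) / ln (real m) + 1"
        unfolding k_def \<eta>_def using k_bound[OF e llt] .
      have NP: "real N \<le> \<Phi>" unfolding N_def \<Phi>_def K_def using N_bound[OF _ kb] lt by simp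
      have N1: "real N \<ge> 1" unfolding N_def by simp
      have tN: "32 * real (Snum m (Suc k)) \<le> real t" using NP h unfolding N_def \<Phi>_def by linarith
      have E: "measure_pmf.expectation (PA m \<delta> t) (\<lambda>xs. real (M_count m t xs k)) \<ge>
          real t / 2 * exp (-(real N * (ln (real N / \<gamma>) + C)))"
      proof -
        have t4: "t \<ge> 4" using t16 by simp
        have E0: "real t / 2 * exp (-(real (Snum m (Suc k)) * (ln (real (Snum m (Suc k)) / ((real m + \<delta>) / (24 * real m))) + 32 * real m)))
           \<le> measure_pmf.expectation (PA m \<delta> t) (\<lambda>xs. real (M_count m t xs k))"
          by (rule order_trans[OF LB_core[OF t16 tN] expect_lb[OF t4 xx_small[OF t16 tN]]])
        then show ?thesis unfolding N_def \<gamma>_def C_def .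
      qed
      have mono: "real N * (ln (real N / \<gamma>) + C) \<le> \<Phi> * (ln (\<Phi> / \<gamma>) + C)"
      proof -
        have l0: "0 \<le> ln (real N / \<gamma>)" using N1 gp g1 by (simp add: field_simps)
        have "ln (real N / \<gamma>) \<le> ln (\<Phi> / \<gamma>)" using NP N1 gp by (simp add: divide_right_mono)
        then show ?thesis using NP N1 l0 Cp by (intro mult_mono) auto
      qed
      have "g (real t) = real t / 2 * exp (-(\<Phi> * (ln (\<Phi> / \<gamma>) + C)))" unfolding g_def \<Phi>_def by simp
      also have "\<dots> \<le> real t / 2 * exp (-(real N * (ln (real N / \<gamma>) + C)))"
        using mono by (intro mult_left_mono) auto
      also have "\<dots> \<le> measure_pmf.expectation (PA m \<delta> t) (\<lambda>xs. real (M_count m t xs k))" using E .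
      finally show "g (real t) \<le> measure_pmf.expectation (PA m \<delta> t)
              (\<lambda>xs. real (M_count m t xs (nat (round ((1 - \<epsilon>) * ln (ln (real t)) / ln (real m))))))"
        unfolding k_def .
    qed
  qed
qed

end

theorem proposition4p6:
  fixes m :: nat and \<delta> \<epsilon> :: real
  assumes "m \<ge> 2" and "- real m < \<delta>" and "\<delta> < 0" and "\<epsilon> > 0"
  shows "filterlim
           (\<lambda>t::nat. measure_pmf.expectation (PA m \<delta> t)
              (\<lambda>xs. real (M_count m t xs
                 (nat (round ((1 - \<epsilon>) * ln (ln (real t)) / ln (real m)))))))
           at_top sequentially"
proof -
  interpret pa m \<delta> by unfold_locales (use assms in auto)
  show ?thesis using main[OF assms(4)] .
qed

end
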